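(* Let $n\ge p$. For $\mathcal X\in\mathrm{St}(n,p,l)$ and $\mathcal U,\mathcal V\in T_{\mathcal X}\mathrm{St}(n,p,l)$ let $\mathcal P=\mathcal I-\frac12\mathcal X*\mathcal X^\top$, $\mathcal W_{\mathcal U}=\mathcal P*\mathcal U*\mathcal X^\top-\mathcal X*\mathcal U^\top*\mathcal P$, and $$\mathcal T_{\mathcal U}\mathcal V=\Big(\mathcal I-\tfrac12\mathcal W_{\mathcal U}\Big)^{-1}*\Big(\mathcal I+\tfrac12\mathcal W_{\mathcal U}\Big)*\mathcal V.$$ Then $\mathcal T$ is an isometric vector transport on $\mathrm{St}(n,p,l)$ associated with the t-Cayley retraction $R_{\mathcal X}(\mathcal U)=(\mathcal I-\frac12\mathcal W_{\mathcal U})^{-1}*(\mathcal I+\frac12\mathcal W_{\mathcal U})*\mathcal X$.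
   Context: Frontal slices $A^{(i)}=\mathcal A(:,:,i)$. The t-product is $\mathcal A*\mathcal B=\operatorname{fold}(\operatorname{bcirc}(\mathcal A)\operatorname{unfold}(\mathcal B))$, where $\operatorname{bcirc}(\mathcal A)$ is the block circulant matrix with $(i,j)$ block $A^{(((i-j)\bmod l)+1)}$, $\operatorname{unfold}$ stacks frontal slices vertically, $\operatorname{fold}$ is its inverse. Transpose: $\mathcal A^\top$ has frontal slices $(A^{(1)})^\top,(A^{(l)})^\top,\dots,(A^{(2)})^\top$. $\mathcal I$ identity tensor; $\mathcal A^{-1}$ t-product inverse. $\mathrm{St}(n,p,l)=\{\mathcal X\in\mathbb R^{n\times p\times l}:\mathcal X^\top*\mathcal X=\mathcal I\}$ with the Riemannian metric $\langle\mathcal A,\mathcal B\rangle_{\mathcal X}=\sum a_{ijk}b_{ijk}$. A vector transport associated with a retraction $R$ is a smooth map $(\eta_x,\xi_x)\mapsto\mathcal T_{\eta_x}\xi_x$ (for tangent vectors at the same point) with $\mathcal T_{\eta_x}\xi_x\in T_{R_x(\eta_x)}M$, $\mathcal T_{0_x}\xi_x=\xi_x$ and linear in $\xi_x$; it is isometric if $\langle\mathcal T_\eta\xi,\mathcal T_\eta\xi\rangle_{R_x(\eta)}=\langle\xi,\xi\rangle_x$ for all $\eta,\xi\in T_xM$. *)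

theory Defs
  imports "HOL-Analysis.Analysis"
begin

text \<open>A tensor is a function of three 0-based indices (row, column, frontal slice).
  A tensor of size n x p x l is one that vanishes outside the index box.\<close>

type_synonym tensor = "nat \<Rightarrow> nat \<Rightarrow> nat \<Rightarrow> real"

definition tdims :: "nat \<Rightarrow> nat \<Rightarrow> nat \<Rightarrow> tensor \<Rightarrow> bool" where
  "tdims n p l A \<longleftrightarrow> (\<forall>i j k. (n \<le> i \<or> p \<le> j \<or> l \<le> k) \<longrightarrow> A i j k = 0)"

definition tadd :: "tensor \<Rightarrow> tensor \<Rightarrow> tensor" where
  "tadd A B = (\<lambda>i j k. A i j k + B i j k)"

definition tsub :: "tensor \<Rightarrow> tensor \<Rightarrow> tensor" where
  "tsub A B = (\<lambda>i j k. A i j k - B i j k)"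

definition tscale :: "real \<Rightarrow> tensor \<Rightarrow> tensor" where
  "tscale c A = (\<lambda>i j k. c * A i j k)"

text \<open>t-product fold(bcirc(A) unfold(B)) with inner dimension m and l frontal slices:
  the k-th frontal slice (0-based) of the product is the sum over s of
  A^((k-s) mod l) B^(s).\<close>

definition tprod :: "nat \<Rightarrow> nat \<Rightarrow> tensor \<Rightarrow> tensor \<Rightarrow> tensor" where
  "tprod m l A B = (\<lambda>i j k. if k < l then
      (\<Sum>r<m. \<Sum>s<l. A i r ((k + l - s) mod l) * B r j s) else 0)"

text \<open>Tensor transpose: frontal slices (A^(1))^T, (A^(l))^T, ..., (A^(2))^T.\<close>

definition ttrans :: "nat \<Rightarrow> tensor \<Rightarrow> tensor" where
  "ttrans l A = (\<lambda>i j k. if k < l then A j i ((l - k) mod l) else 0)"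

definition tid :: "nat \<Rightarrow> nat \<Rightarrow> tensor" where
  "tid n l = (\<lambda>i j k. if i = j \<and> i < n \<and> k = 0 \<and> 0 < l then 1 else 0)"

definition tinvertible :: "nat \<Rightarrow> nat \<Rightarrow> tensor \<Rightarrow> bool" where
  "tinvertible n l A \<longleftrightarrow>
     (\<exists>B. tdims n n l B \<and> tprod n l A B = tid n l \<and> tprod n l B A = tid n l)"

definition tinv :: "nat \<Rightarrow> nat \<Rightarrow> tensor \<Rightarrow> tensor" where
  "tinv n l A = (SOME B. tdims n n l B \<and> tprod n l A B = tid n l \<and> tprod n l B A = tid n l)"

definition tinner :: "nat \<Rightarrow> nat \<Rightarrow> nat \<Rightarrow> tensor \<Rightarrow> tensor \<Rightarrow> real" where
  "tinner n p l A B = (\<Sum>i<n. \<Sum>j<p. \<Sum>k<l. A i j k * B i j k)"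

definition tStiefel :: "nat \<Rightarrow> nat \<Rightarrow> nat \<Rightarrow> tensor set" where
  "tStiefel n p l = {X. tdims n p l X \<and> tprod n l (ttrans l X) X = tid p l}"

text \<open>Tangent space of the embedded submanifold St(n,p,l) at X: velocities at 0 of
  curves in St(n,p,l) through X.\<close>

definition tTangent :: "nat \<Rightarrow> nat \<Rightarrow> nat \<Rightarrow> tensor \<Rightarrow> tensor set" where
  "tTangent n p l X = {U. tdims n p l U \<and>
     (\<exists>\<gamma> :: real \<Rightarrow> tensor. (\<forall>t. \<gamma> t \<in> tStiefel n p l) \<and> \<gamma> 0 = X \<and>
        (\<forall>i j k. ((\<lambda>t. \<gamma> t i j k) has_real_derivative U i j k) (at 0)))}"

definition tP :: "nat \<Rightarrow> nat \<Rightarrow> nat \<Rightarrow> tensor \<Rightarrow> tensor" where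
  "tP n p l X = tsub (tid n l) (tscale (1/2) (tprod p l X (ttrans l X)))"

definition tW :: "nat \<Rightarrow> nat \<Rightarrow> nat \<Rightarrow> tensor \<Rightarrow> tensor \<Rightarrow> tensor" where
  "tW n p l X U = tsub (tprod p l (tprod n l (tP n p l X) U) (ttrans l X))
                       (tprod n l (tprod p l X (ttrans l U)) (tP n p l X))"

definition tCayley :: "nat \<Rightarrow> nat \<Rightarrow> nat \<Rightarrow> tensor \<Rightarrow> tensor \<Rightarrow> tensor" where
  "tCayley n p l X U =
     tprod n l (tprod n l (tinv n l (tsub (tid n l) (tscale (1/2) (tW n p l X U))))
                          (tadd (tid n l) (tscale (1/2) (tW n p l X U)))) X"

definition tTransport :: "nat \<Rightarrow> nat \<Rightarrow> nat \<Rightarrow> tensor \<Rightarrow> tensor \<Rightarrow> tensor \<Rightarrow> tensor" where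
  "tTransport n p l X U V =
     tprod n l (tprod n l (tinv n l (tsub (tid n l) (tscale (1/2) (tW n p l X U))))
                          (tadd (tid n l) (tscale (1/2) (tW n p l X U)))) V"

text \<open>Points are functions z :: 'c \<Rightarrow> real that vanish outside a finite coordinate set C.
  Neighbourhoods and continuity are taken w.r.t. the (sup-)distance on the coordinates in C.\<close>

definition coord_space :: "'c set \<Rightarrow> ('c \<Rightarrow> real) set" where
  "coord_space C = {z. \<forall>c. c \<notin> C \<longrightarrow> z c = 0}"

definition coord_open :: "'c set \<Rightarrow> ('c \<Rightarrow> real) set \<Rightarrow> bool" where
  "coord_open C D \<longleftrightarrow> D \<subseteq> coord_space C \<and>
     (\<forall>z\<in>D. \<exists>e>0. \<forall>w\<in>coord_space C. (\<forall>c\<in>C. \<bar>w c - z c\<bar> < e) \<longrightarrow> w \<in> D)"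

definition coord_cont :: "'c set \<Rightarrow> ('c \<Rightarrow> real) set \<Rightarrow> (('c \<Rightarrow> real) \<Rightarrow> real) \<Rightarrow> bool" where
  "coord_cont C D f \<longleftrightarrow>
     (\<forall>z\<in>D. \<forall>\<epsilon>>0. \<exists>\<delta>>0. \<forall>w\<in>D. (\<forall>c\<in>C. \<bar>w c - z c\<bar> < \<delta>) \<longrightarrow> \<bar>f w - f z\<bar> < \<epsilon>)"

text \<open>C-infinity: continuous, all first partial derivatives exist on D and are again C-infinity
  (greatest fixed point, i.e. partial derivatives of every order exist and are continuous).\<close>

coinductive coord_smooth :: "'c set \<Rightarrow> ('c \<Rightarrow> real) set \<Rightarrow> (('c \<Rightarrow> real) \<Rightarrow> real) \<Rightarrow> bool"
  for C D where
  "coord_cont C D f \<Longrightarrow>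
   (\<forall>c\<in>C. \<exists>g. (\<forall>z\<in>D. ((\<lambda>t. f (z(c := z c + t))) has_real_derivative g z) (at 0))
              \<and> coord_smooth C D g) \<Longrightarrow> coord_smooth C D f"

definition triple_coords :: "nat \<Rightarrow> nat \<Rightarrow> nat \<Rightarrow> (nat \<times> nat \<times> nat \<times> nat) set" where
  "triple_coords n p l = {(t,i,j,k). t < 3 \<and> i < n \<and> j < p \<and> k < l}"

definition pack3 :: "tensor \<Rightarrow> tensor \<Rightarrow> tensor \<Rightarrow> (nat \<times> nat \<times> nat \<times> nat) \<Rightarrow> real" where
  "pack3 X U V = (\<lambda>(t,i,j,k). if t = 0 then X i j k else if t = 1 then U i j k
                               else if t = 2 then V i j k else 0)"

definition unpack :: "nat \<Rightarrow> ((nat \<times> nat \<times> nat \<times> nat) \<Rightarrow> real) \<Rightarrow> tensor" where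
  "unpack t z = (\<lambda>i j k. z (t,i,j,k))"

end

theory Submission
  imports Defs "HOL-Library.Function_Algebras"
begin

lemma mod2: "x < 2*l \<Longrightarrow> (x::nat) mod l = (if x < l then x else x - l)"
  by (cases "x < l") (auto simp: le_mod_geq)

lemma modA: "s < l \<Longrightarrow> s' < l \<Longrightarrow> ((s'+s) mod l + l - s) mod l = (s'::nat)"
  by (simp add: mod2)

lemma modB: "k < l \<Longrightarrow> s < l \<Longrightarrow> s' < l \<Longrightarrow>
   (k + l - (s'+s) mod l) mod l = ((k+l-s) mod l + l - s') mod (l::nat)"
  by (simp add: mod2 ac_simps; arith)

lemma sum_shift: assumes "s < (l::nat)" shows "(\<Sum>s'<l. f ((s'+s) mod l)) = (\<Sum>s''<l. f s'')"
proof (rule sum.reindex_bij_witness[where i="\<lambda>s''. (s''+l-s) mod l" and j="\<lambda>s'. (s'+s) mod l"])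
  fix a assume "a \<in> {..<l}" thus "(a + l - s) mod l \<in> {..<l}" using assms by auto
next
  fix a assume "a \<in> {..<l}" thus "(a + s) mod l \<in> {..<l}" using assms by auto
next
  fix a assume "a \<in> {..<l}" thus "((a + s) mod l + l - s) mod l = a" using assms by (simp add: mod2)
next
  fix a assume "a \<in> {..<l}" thus "((a + l - s) mod l + s) mod l = a" using assms by (simp add: mod2)
qed auto

lemma conv_shift:
  fixes f g :: "nat \<Rightarrow> real"
  assumes "k < l" "s < l"
  shows "(\<Sum>s'<l. f (((k+l-s) mod l + l - s') mod l) * g s') =
         (\<Sum>s''<l. f ((k+l-s'') mod l) * g ((s''+l-s) mod l))"
proof -
  have "(\<Sum>s''<l. f ((k+l-s'') mod l) * g ((s''+l-s) mod l)) =
        (\<Sum>s'<l. f ((k+l-(s'+s) mod l) mod l) * g (((s'+s) mod l+l-s) mod l))"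
    using sum_shift[OF assms(2), of "\<lambda>s''. f ((k+l-s'') mod l) * g ((s''+l-s) mod l)"] by simp
  also have "\<dots> = (\<Sum>s'<l. f (((k+l-s) mod l + l - s') mod l) * g s')"
    by (rule sum.cong[OF refl]) (simp add: modA modB assms)
  finally show ?thesis by simp
qed

lemma swap4: "(\<Sum>a\<in>A. \<Sum>b\<in>B. \<Sum>c\<in>C. \<Sum>d\<in>D. f a b c d) = (\<Sum>c\<in>C. \<Sum>d\<in>D. \<Sum>a\<in>A. \<Sum>b\<in>B. f a b c d)"
proof -
  have "(\<Sum>a\<in>A. \<Sum>b\<in>B. \<Sum>c\<in>C. \<Sum>d\<in>D. f a b c d) = (\<Sum>a\<in>A. \<Sum>c\<in>C. \<Sum>b\<in>B. \<Sum>d\<in>D. f a b c d)"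
    by (rule sum.cong[OF refl], rule sum.swap)
  also have "\<dots> = (\<Sum>c\<in>C. \<Sum>a\<in>A. \<Sum>b\<in>B. \<Sum>d\<in>D. f a b c d)" by (rule sum.swap)
  also have "\<dots> = (\<Sum>c\<in>C. \<Sum>a\<in>A. \<Sum>d\<in>D. \<Sum>b\<in>B. f a b c d)"
    by (intro sum.cong refl, rule sum.swap)
  also have "\<dots> = (\<Sum>c\<in>C. \<Sum>d\<in>D. \<Sum>a\<in>A. \<Sum>b\<in>B. f a b c d)"
    by (rule sum.cong[OF refl], rule sum.swap)
  finally show ?thesis .
qed

lemma tprod_assoc: "tprod m l (tprod q l A B) C = tprod q l A (tprod m l B C)"
proof (intro ext)
  fix i j k
  show "tprod m l (tprod q l A B) C i j k = tprod q l A (tprod m l B C) i j k"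
  proof (cases "k < l")
    case False thus ?thesis by (simp add: tprod_def)
  next
    case True
    have L: "tprod m l (tprod q l A B) C i j k =
      (\<Sum>r<m. \<Sum>s<l. \<Sum>r'<q. \<Sum>s'<l. A i r' (((k+l-s) mod l + l - s') mod l) * B r' r s' * C r j s)"
      using True by (simp add: tprod_def sum_distrib_right)
    have R: "tprod q l A (tprod m l B C) i j k =
      (\<Sum>r'<q. \<Sum>s''<l. \<Sum>r<m. \<Sum>s<l. A i r' ((k+l-s'') mod l) * B r' r ((s''+l-s) mod l) * C r j s)"
      using True by (simp add: tprod_def sum_distrib_left mult.assoc)
    also have "\<dots> = (\<Sum>r<m. \<Sum>s<l. \<Sum>r'<q. \<Sum>s''<l. A i r' ((k+l-s'') mod l) * B r' r ((s''+l-s) mod l) * C r j s)"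
      by (rule swap4)
    also have "\<dots> = (\<Sum>r<m. \<Sum>s<l. \<Sum>r'<q. \<Sum>s'<l. A i r' (((k+l-s) mod l + l - s') mod l) * B r' r s' * C r j s)"
    proof -
      have eq: "(\<Sum>s''<l. A i r' ((k+l-s'') mod l) * B r' r ((s''+l-s) mod l) * C r j s)
          = (\<Sum>s'<l. A i r' (((k+l-s) mod l + l - s') mod l) * B r' r s' * C r j s)"
        if "s < l" for r s r'
      proof -
        have "(\<Sum>s''<l. A i r' ((k+l-s'') mod l) * B r' r ((s''+l-s) mod l) * C r j s)
            = (\<Sum>s''<l. A i r' ((k+l-s'') mod l) * B r' r ((s''+l-s) mod l)) * C r j s"
          by (simp add: sum_distrib_right)
        also have "\<dots> = (\<Sum>s'<l. A i r' (((k+l-s) mod l + l - s') mod l) * B r' r s') * C r j s"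
          using conv_shift[OF True \<open>s < l\<close>, of "A i r'" "B r' r"] by simp
        also have "\<dots> = (\<Sum>s'<l. A i r' (((k+l-s) mod l + l - s') mod l) * B r' r s' * C r j s)"
          by (simp add: sum_distrib_right)
        finally show ?thesis .
      qed
      show ?thesis by (rule sum.cong[OF refl], rule sum.cong[OF refl], rule sum.cong[OF refl], rule eq, simp)
    qed
    finally show ?thesis using L by simp
  qed
qed

lemma modT1: "k < l \<Longrightarrow> s' < l \<Longrightarrow> (l - (k+l-(s'+k) mod l) mod l) mod l = (s'::nat)"
  by (simp add: mod2; arith)

lemma modT2: "k < l \<Longrightarrow> s' < l \<Longrightarrow> (l - (s'+k) mod l) mod l = ((l-k) mod l + l - s') mod (l::nat)"
  by (simp add: mod2; arith)

lemma ttrans_tprod: "ttrans l (tprod m l A B) = tprod m l (ttrans l B) (ttrans l A)"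
proof (intro ext)
  fix i j k
  show "ttrans l (tprod m l A B) i j k = tprod m l (ttrans l B) (ttrans l A) i j k"
  proof (cases "k < l")
    case False thus ?thesis by (simp add: tprod_def ttrans_def)
  next
    case True
    have L: "ttrans l (tprod m l A B) i j k = (\<Sum>r<m. \<Sum>s<l. A j r ((((l-k) mod l)+l-s) mod l) * B r i s)"
      using True by (simp add: tprod_def ttrans_def)
    have R: "tprod m l (ttrans l B) (ttrans l A) i j k =
       (\<Sum>r<m. \<Sum>s<l. B r i ((l - (k+l-s) mod l) mod l) * A j r ((l-s) mod l))"
      using True by (simp add: tprod_def ttrans_def)
    have eq: "(\<Sum>s<l. B r i ((l - (k+l-s) mod l) mod l) * A j r ((l-s) mod l)) =
              (\<Sum>s<l. A j r ((((l-k) mod l)+l-s) mod l) * B r i s)" for r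
    proof -
      have "(\<Sum>s<l. B r i ((l - (k+l-s) mod l) mod l) * A j r ((l-s) mod l)) =
            (\<Sum>s'<l. B r i ((l - (k+l-(s'+k) mod l) mod l) mod l) * A j r ((l-(s'+k) mod l) mod l))"
        using sum_shift[OF True, of "\<lambda>s. B r i ((l - (k+l-s) mod l) mod l) * A j r ((l-s) mod l)"] by simp
      also have "\<dots> = (\<Sum>s<l. A j r ((((l-k) mod l)+l-s) mod l) * B r i s)"
        by (rule sum.cong[OF refl]) (simp add: modT1 modT2 True)
      finally show ?thesis .
    qed
    show ?thesis unfolding L R by (simp add: eq)
  qed
qed

lemma modinv: "k < l \<Longrightarrow> (l - (l - k) mod l) mod l = (k::nat)"
  by (cases "k = 0") (auto simp: mod2)

lemma tdimsD: "tdims n p l A \<Longrightarrow> n \<le> i \<or> p \<le> j \<or> l \<le> k \<Longrightarrow> A i j k = 0"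
  unfolding tdims_def by blast

lemma ttrans_ttrans: "tdims n p l A \<Longrightarrow> ttrans l (ttrans l A) = A"
  unfolding tdims_def ttrans_def
  by (intro ext) (auto simp: modinv)

lemma ttrans_tid: "ttrans l (tid n l) = tid n l"
  unfolding tid_def ttrans_def by (intro ext) (auto simp: mod2)

lemma ifmul: "(if P then 1 else 0) * (x::real) = (if P then x else 0)" by simp
lemma mulif: "(x::real) * (if P then 1 else 0) = (if P then x else 0)" by simp
lemma delta2: "(\<Sum>r<(n::nat). \<Sum>s<l. (if i = r \<and> s = (k::nat) then 1 else 0) * F r s) = (if i < n \<and> k < l then F i k else (0::real))"
proof -
  have "(\<Sum>r<n. \<Sum>s<l. (if i = r \<and> s = k then 1 else 0) * F r s) = (\<Sum>r<n. if i = r then (\<Sum>s<l. if s = k then F r s else 0) else 0)"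
    by (rule sum.cong[OF refl]) (auto simp: ifmul intro: sum.cong)
  also have "\<dots> = (if i < n \<and> k < l then F i k else (0::real))"
    by (cases "k < l") simp_all
  finally show ?thesis .
qed
lemma delta2': "(\<Sum>r<(n::nat). \<Sum>s<l. F r s * (if r = i \<and> s = (k::nat) then 1 else 0)) = (if i < n \<and> k < l then F i k else (0::real))"
proof -
  have "(\<Sum>r<n. \<Sum>s<l. F r s * (if r = i \<and> s = k then 1 else 0)) = (\<Sum>r<n. \<Sum>s<l. (if i = r \<and> s = k then 1 else 0) * F r s)"
    by (intro sum.cong refl) auto
  thus ?thesis by (simp only: delta2)
qed

lemma tid_left: assumes "tdims n q l A" shows "tprod n l (tid n l) A = A"
proof (intro ext)
  fix i j k
  show "tprod n l (tid n l) A i j k = A i j k"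
  proof (cases "k < l \<and> i < n")
    case False
    hence "A i j k = 0" using assms unfolding tdims_def by auto
    moreover have "tprod n l (tid n l) A i j k = 0" using False unfolding tprod_def tid_def by auto
    ultimately show ?thesis by simp
  next
    case True
    have c: "s < l \<Longrightarrow> ((k + l - s) mod l = 0) = (s = k)" for s
      using True by (subst mod2) auto
    have kl: "k < l" and iN: "i < n" using True by auto
    have "tprod n l (tid n l) A i j k = (\<Sum>r<n. \<Sum>s<l. (if i = r \<and> s = k then 1 else 0) * A r j s)"
      unfolding tprod_def tid_def
      apply (simp only: kl if_True)
      apply (intro sum.cong refl)
      using c iN kl by auto
    also have "\<dots> = A i j k" using True by (simp add: delta2)
    finally show ?thesis .
  qed
qed

lemma tid_right: assumes "tdims m p l A" shows "tprod p l A (tid p l) = A"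
proof (intro ext)
  fix i j k
  show "tprod p l A (tid p l) i j k = A i j k"
  proof (cases "k < l \<and> j < p")
    case False
    hence "A i j k = 0" using assms unfolding tdims_def by auto
    moreover have "tprod p l A (tid p l) i j k = 0" using False unfolding tprod_def tid_def by auto
    ultimately show ?thesis by simp
  next
    case True
    have kl: "k < l" and jp: "j < p" using True by auto
    have "tprod p l A (tid p l) i j k = (\<Sum>r<p. \<Sum>s<l. A i r ((k+l-s) mod l) * (if r = j \<and> s = 0 then 1 else 0))"
      unfolding tprod_def tid_def
      apply (simp only: kl if_True)
      apply (intro sum.cong refl)
      using jp kl by auto
    also have "\<dots> = A i j ((k + l) mod l)" using True by (simp add: delta2')
    finally show ?thesis using True by simp
  qed
qed

lemma tdims_tprod: "tdims n m' l A \<Longrightarrow> tdims m'' q l B \<Longrightarrow> tdims n q l (tprod m l A B)"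
  unfolding tdims_def tprod_def by auto

lemma tdims_ttrans: "tdims n p l A \<Longrightarrow> tdims p n l (ttrans l A)"
  unfolding tdims_def ttrans_def by auto

lemma tdims_tid: "tdims n n l (tid n l)"
  unfolding tdims_def tid_def by auto

lemma tdims_tadd: "tdims n p l A \<Longrightarrow> tdims n p l B \<Longrightarrow> tdims n p l (tadd A B)"
  unfolding tdims_def tadd_def by auto
lemma tdims_tsub: "tdims n p l A \<Longrightarrow> tdims n p l B \<Longrightarrow> tdims n p l (tsub A B)"
  unfolding tdims_def tsub_def by auto
lemma tdims_tscale: "tdims n p l A \<Longrightarrow> tdims n p l (tscale c A)"
  unfolding tdims_def tscale_def by auto
lemma tdims_zero: "tdims n p l (\<lambda>i j k. 0)"
  unfolding tdims_def by auto

lemma tprod_tadd_left: "tprod m l (tadd A B) C = tadd (tprod m l A C) (tprod m l B C)"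
  unfolding tprod_def tadd_def by (intro ext) (simp add: distrib_right sum.distrib)
lemma tprod_tadd_right: "tprod m l C (tadd A B) = tadd (tprod m l C A) (tprod m l C B)"
  unfolding tprod_def tadd_def by (intro ext) (simp add: distrib_left sum.distrib)
lemma tprod_tsub_left: "tprod m l (tsub A B) C = tsub (tprod m l A C) (tprod m l B C)"
  unfolding tprod_def tsub_def by (intro ext) (simp add: left_diff_distrib sum_subtractf)
lemma tprod_tsub_right: "tprod m l C (tsub A B) = tsub (tprod m l C A) (tprod m l C B)"
  unfolding tprod_def tsub_def by (intro ext) (simp add: right_diff_distrib sum_subtractf)
lemma tprod_tscale_left: "tprod m l (tscale c A) C = tscale c (tprod m l A C)"
  unfolding tprod_def tscale_def by (intro ext) (simp add: mult.assoc sum_distrib_left)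
lemma tprod_tscale_right: "tprod m l C (tscale c A) = tscale c (tprod m l C A)"
  unfolding tprod_def tscale_def by (intro ext) (simp add: mult.left_commute sum_distrib_left)
lemma tprod_zero_left: "tprod m l (\<lambda>i j k. 0) C = (\<lambda>i j k. 0)"
  unfolding tprod_def by (intro ext) simp
lemma tprod_zero_right: "tprod m l C (\<lambda>i j k. 0) = (\<lambda>i j k. 0)"
  unfolding tprod_def by (intro ext) simp
lemma ttrans_tadd: "ttrans l (tadd A B) = tadd (ttrans l A) (ttrans l B)"
  unfolding ttrans_def tadd_def by (intro ext) simp
lemma ttrans_tsub: "ttrans l (tsub A B) = tsub (ttrans l A) (ttrans l B)"
  unfolding ttrans_def tsub_def by (intro ext) simp
lemma ttrans_tscale: "ttrans l (tscale c A) = tscale c (ttrans l A)"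
  unfolding ttrans_def tscale_def by (intro ext) simp
lemma ttrans_zero: "ttrans l (\<lambda>i j k. 0) = (\<lambda>i j k. 0)"
  unfolding ttrans_def by (intro ext) simp

definition ttr :: "nat \<Rightarrow> tensor \<Rightarrow> real" where
  "ttr p C = (\<Sum>j<p. C j j 0)"

lemma tinner_ttr: assumes "0 < l" shows "tinner n p l A B = ttr p (tprod n l (ttrans l A) B)"
proof -
  have "ttr p (tprod n l (ttrans l A) B) = (\<Sum>j<p. \<Sum>r<n. \<Sum>s<l. A r j s * B r j s)"
    unfolding ttr_def tprod_def ttrans_def using assms by (auto intro!: sum.cong simp: modinv)
  also have "\<dots> = tinner n p l A B" unfolding tinner_def by (rule sum.swap)
  finally show ?thesis by simp
qed

lemma ttr_ttrans: "0 < l \<Longrightarrow> ttr p (ttrans l C) = ttr p C"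
  unfolding ttr_def ttrans_def by simp

lemma ttr_tscale: "ttr p (tscale c C) = c * ttr p C"
  unfolding ttr_def tscale_def by (simp add: sum_distrib_left)

lemma skew_zero:
  assumes l: "0 < l" and B: "tdims n q l B" and W: "ttrans l W = tscale (-1) W"
  shows "tinner n q l B (tprod n l W B) = 0"
proof -
  let ?M = "tprod n l (ttrans l B) (tprod n l W B)"
  have "ttrans l ?M = tprod n l (ttrans l (tprod n l W B)) (ttrans l (ttrans l B))" by (rule ttrans_tprod)
  also have "\<dots> = tprod n l (tprod n l (ttrans l B) (ttrans l W)) B"
    using B by (simp add: ttrans_tprod ttrans_ttrans)
  also have "\<dots> = tscale (-1) ?M" by (simp add: W tprod_tscale_left tprod_tscale_right tprod_assoc)
  finally have "ttrans l ?M = tscale (-1) ?M" .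
  hence "ttr q ?M = - ttr q ?M" using ttr_ttrans[OF l, of q ?M] ttr_tscale[of q "-1" ?M] by simp
  hence "ttr q ?M = 0" by simp
  thus ?thesis using tinner_ttr[OF l] by simp
qed

lemma tinner_tsub_right: "tinner n p l B (tsub X Y) = tinner n p l B X - tinner n p l B Y"
  unfolding tinner_def tsub_def by (simp add: right_diff_distrib sum_subtractf)
lemma tinner_tscale_right: "tinner n p l B (tscale c X) = c * tinner n p l B X"
  unfolding tinner_def tscale_def by (simp add: sum_distrib_left mult.left_commute)
lemma tinner_sym: "tinner n p l A B = tinner n p l B A"
  unfolding tinner_def by (simp add: mult.commute)

definition skew :: "nat \<Rightarrow> nat \<Rightarrow> tensor \<Rightarrow> bool" where
  "skew n l W \<longleftrightarrow> tdims n n l W \<and> ttrans l W = tscale (-1) W"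

lemma inner_cayley:
  assumes W: "skew n l W" and B: "tdims n q l B"
  shows "tinner n q l B (tprod n l (tsub (tid n l) (tscale (1/2) W)) B) = tinner n q l B B"
proof (cases "l = 0")
  case True thus ?thesis by (simp add: tinner_def)
next
  case False
  hence l: "0 < l" by simp
  have "tprod n l (tsub (tid n l) (tscale (1/2) W)) B = tsub B (tscale (1/2) (tprod n l W B))"
    using B by (simp add: tprod_tsub_left tprod_tscale_left tid_left)
  thus ?thesis using skew_zero[OF l B] W unfolding skew_def
    by (simp add: tinner_tsub_right tinner_tscale_right)
qed

lemma tinner_self_zero:
  assumes "tdims n q l B" "tinner n q l B B = 0" shows "B = (\<lambda>i j k. 0)"
proof (intro ext)
  fix i j k
  show "B i j k = 0"
  proof (cases "i < n \<and> j < q \<and> k < l")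
    case False thus ?thesis using assms(1) tdimsD by (metis not_less)
  next
    case True
    have "(\<Sum>i<n. \<Sum>j<q. \<Sum>k<l. B i j k * B i j k) = 0" using assms(2) unfolding tinner_def .
    hence "\<forall>i\<in>{..<n}. (\<Sum>j<q. \<Sum>k<l. B i j k * B i j k) = 0"
      by (subst (asm) sum_nonneg_eq_0_iff) (auto intro!: sum_nonneg)
    hence "(\<Sum>j<q. \<Sum>k<l. B i j k * B i j k) = 0" using True by auto
    hence "\<forall>j\<in>{..<q}. (\<Sum>k<l. B i j k * B i j k) = 0"
      by (subst (asm) sum_nonneg_eq_0_iff) (auto intro!: sum_nonneg)
    hence "(\<Sum>k<l. B i j k * B i j k) = 0" using True by auto
    hence "\<forall>k\<in>{..<l}. B i j k * B i j k = 0"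
      by (subst (asm) sum_nonneg_eq_0_iff) auto
    thus ?thesis using True by auto
  qed
qed

interpretation TV: vector_space tscale
  by unfold_locales (auto simp: tscale_def fun_eq_iff algebra_simps)

lemma tadd_plus: "tadd A B = A + B" by (simp add: tadd_def fun_eq_iff)
lemma tsub_minus: "tsub A B = A - B" by (simp add: tsub_def fun_eq_iff)
lemma tzero: "(\<lambda>i j k. 0::real) = 0" by (simp add: fun_eq_iff)

lemma sum_app: "(sum f S) x = sum (\<lambda>a. f a x) S"
  by (induction S rule: infinite_finite_induct) auto

lemma sum_app3: "(sum f S) i j k = sum (\<lambda>a. f a i j k) (S::'a set)" for f :: "'a \<Rightarrow> tensor"
  by (simp add: sum_app)

lemma right_inverse_abs:
  fixes f :: "tensor \<Rightarrow> tensor"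
  assumes lin: "Vector_Spaces.linear tscale tscale f"
  and V: "TV.subspace V" and finE: "finite E" and VE: "V \<subseteq> TV.span E"
  and fV: "\<And>x. x \<in> V \<Longrightarrow> f x \<in> V" and inj: "\<And>x. x \<in> V \<Longrightarrow> f x = 0 \<Longrightarrow> x = 0"
  and y: "y \<in> V"
  shows "\<exists>x\<in>V. f x = y"
proof -
  interpret L: Vector_Spaces.linear tscale tscale f by (rule lin)
  obtain Bs where Bs: "Bs \<subseteq> V" "TV.independent Bs" "V \<subseteq> TV.span Bs" "card Bs = TV.dim V"
    by (rule TV.basis_exists)
  have "Bs \<subseteq> TV.span E" using Bs(1) VE by blast
  hence finB: "finite Bs" using TV.independent_span_bound[OF finE Bs(2)] by blast
  have spB: "TV.span Bs \<subseteq> V" using TV.span_minimal[OF Bs(1) V] .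
  have injV: "inj_on f V"
  proof (rule inj_onI)
    fix a b assume "a \<in> V" "b \<in> V" "f a = f b"
    hence "a - b \<in> V" "f (a - b) = 0" using V L.diff by (auto simp: TV.subspace_diff)
    hence "a - b = 0" using inj by blast
    thus "a = b" by simp
  qed
  have inj2: "inj_on f (TV.span Bs)" using inj_on_subset[OF injV spB] .
  have indf: "TV.independent (f ` Bs)" using L.independent_injective_image[OF Bs(2) inj2] .
  have cardf: "card (f ` Bs) = card Bs" using card_image[OF inj_on_subset[OF injV Bs(1)]] .
  have "y \<in> TV.span (f ` Bs)"
  proof (rule ccontr)
    assume ny: "y \<notin> TV.span (f ` Bs)"
    hence ind2: "TV.independent (insert y (f ` Bs))" using TV.independent_insertI indf by blast
    have "insert y (f ` Bs) \<subseteq> TV.span Bs" using y Bs fV by auto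
    hence "card (insert y (f ` Bs)) \<le> card Bs" using TV.independent_span_bound[OF finB ind2] by blast
    moreover have "y \<notin> f ` Bs" using ny TV.span_base by blast
    hence "card (insert y (f ` Bs)) = card Bs + 1" using cardf finB by simp
    ultimately show False by simp
  qed
  hence "y \<in> f ` TV.span Bs" using L.span_image by simp
  thus ?thesis using spB by blast
qed

definition el :: "nat \<times> nat \<times> nat \<Rightarrow> tensor" where
  "el x = (\<lambda>i j k. if (i, j, k) = x then 1 else 0)"

lemma dims_subspace: "TV.subspace {B. tdims n m l B}"
  unfolding TV.subspace_def
  using tdims_tadd[of n m l] tdims_tscale[of n m l] tdims_zero[of n m l]
  by (auto simp: tadd_plus tzero)

lemma dims_span: "{B. tdims n m l B} \<subseteq> TV.span (el ` ({..<n} \<times> {..<m} \<times> {..<l}))"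
proof
  fix B assume "B \<in> {B. tdims n m l B}"
  hence B: "tdims n m l B" by simp
  let ?box = "{..<n} \<times> {..<m} \<times> {..<l}"
  let ?S = "\<Sum>x\<in>?box. tscale (B (fst x) (fst (snd x)) (snd (snd x))) (el x)"
  have "?S \<in> TV.span (el ` ?box)"
    by (intro TV.span_sum TV.span_scale TV.span_base) auto
  moreover have "?S = B"
  proof (intro ext)
    fix i j k
    have "?S i j k = (\<Sum>x\<in>?box. if x = (i, j, k) then B i j k else 0)"
      unfolding sum_app3 tscale_def el_def by (intro sum.cong refl) auto
    also have "\<dots> = B i j k"
      using tdimsD[OF B, of i j k] by (auto simp: not_less)
    finally show "?S i j k = B i j k" .
  qed
  ultimately show "B \<in> TV.span (el ` ?box)" by simp
qed

lemma tprod_linear: "Vector_Spaces.linear tscale tscale (tprod m l A)"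
  unfolding Vector_Spaces.linear_iff
  by (simp add: TV.vector_space_axioms tprod_tadd_right[unfolded tadd_plus] tprod_tscale_right)

lemma cayley_right_inv:
  assumes W: "skew n l W"
  shows "\<exists>Bi. tdims n n l Bi \<and> tprod n l (tsub (tid n l) (tscale (1/2) W)) Bi = tid n l"
proof -
  let ?A = "tsub (tid n l) (tscale (1/2) W)"
  have Wd: "tdims n n l W" using W unfolding skew_def by simp
  have Ad: "tdims n n l ?A" using Wd by (intro tdims_tsub tdims_tscale tdims_tid)
  have "\<exists>x\<in>{B. tdims n n l B}. tprod n l ?A x = tid n l"
  proof (rule right_inverse_abs[OF tprod_linear dims_subspace _ dims_span])
    show "finite (el ` ({..<n} \<times> {..<n} \<times> {..<l}))" by simp
    show "tprod n l ?A x \<in> {B. tdims n n l B}" if "x \<in> {B. tdims n n l B}" for x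
      using that Ad by (auto intro: tdims_tprod)
    show "x = 0" if "x \<in> {B. tdims n n l B}" "tprod n l ?A x = 0" for x
    proof -
      have x: "tdims n n l x" using that by simp
      have "tinner n n l x x = tinner n n l x (tprod n l ?A x)" using inner_cayley[OF W x] by simp
      also have "\<dots> = 0" using that(2) by (simp add: tinner_def)
      finally show ?thesis using tinner_self_zero[OF x] tzero by simp
    qed
    show "tid n l \<in> {B. tdims n n l B}" using tdims_tid by simp
  qed
  thus ?thesis by auto
qed

lemma skew_neg: assumes "skew n l W" shows "skew n l (tscale (-1) W)"
proof -
  have d: "tdims n n l W" and t: "ttrans l W = tscale (-1) W" using assms unfolding skew_def by auto
  have "ttrans l (tscale (-1) W) = tscale (-1) (tscale (-1) W)"
    unfolding ttrans_tscale t ..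
  thus ?thesis unfolding skew_def using tdims_tscale[OF d] by blast
qed

lemma cayley_invertible:
  assumes W: "skew n l W"
  shows "tinvertible n l (tsub (tid n l) (tscale (1/2) W))"
proof -
  let ?A = "tsub (tid n l) (tscale (1/2) W)"
  obtain B where B: "tdims n n l B" "tprod n l ?A B = tid n l" using cayley_right_inv[OF W] by blast
  obtain C where C: "tdims n n l C" "tprod n l (tsub (tid n l) (tscale (1/2) (tscale (-1) W))) C = tid n l"
    using cayley_right_inv[OF skew_neg[OF W]] by blast
  have At: "ttrans l ?A = tsub (tid n l) (tscale (1/2) (tscale (-1) W))"
    using W unfolding skew_def by (simp add: ttrans_tsub ttrans_tid ttrans_tscale)
  have "ttrans l (tprod n l (ttrans l ?A) C) = tid n l" using C(2) At ttrans_tid by simp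
  hence CA: "tprod n l (ttrans l C) ?A = tid n l"
    using W unfolding skew_def
    by (simp add: ttrans_tprod ttrans_ttrans[OF tdims_tsub[OF tdims_tid tdims_tscale]])
  have Ctd: "tdims n n l (ttrans l C)" using tdims_ttrans[OF C(1)] .
  have "ttrans l C = tprod n l (ttrans l C) (tprod n l ?A B)" using B(2) tid_right[OF Ctd] by simp
  also have "\<dots> = tprod n l (tprod n l (ttrans l C) ?A) B" by (simp add: tprod_assoc)
  also have "\<dots> = B" using CA tid_left[OF B(1)] by simp
  finally have "tprod n l B ?A = tid n l" using CA by simp
  thus ?thesis unfolding tinvertible_def using B by blast
qed

lemma tinv_props:
  assumes "tinvertible n l A"
  shows "tdims n n l (tinv n l A) \<and> tprod n l A (tinv n l A) = tid n l \<and> tprod n l (tinv n l A) A = tid n l"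
  using assms unfolding tinvertible_def tinv_def by (rule someI_ex)

lemma tP_sym: "tdims n p l X \<Longrightarrow> ttrans l (tP n p l X) = tP n p l X"
  unfolding tP_def by (simp add: ttrans_tsub ttrans_tid ttrans_tscale ttrans_tprod ttrans_ttrans)

lemma tdims_tP: "tdims n p l X \<Longrightarrow> tdims n n l (tP n p l X)"
  unfolding tP_def by (intro tdims_tsub tdims_tid tdims_tscale tdims_tprod tdims_ttrans) auto

lemma tW_skew:
  assumes X: "tdims n p l X" and U: "tdims n p l U"
  shows "skew n l (tW n p l X U)"
proof -
  let ?P = "tP n p l X"
  have Pd: "tdims n n l ?P" using tdims_tP[OF X] .
  have d: "tdims n n l (tW n p l X U)"
    unfolding tW_def using Pd X U
    by (intro tdims_tsub tdims_tprod tdims_ttrans) auto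
  have t1: "ttrans l (tprod p l (tprod n l ?P U) (ttrans l X)) = tprod n l (tprod p l X (ttrans l U)) ?P"
    using X U tP_sym[OF X] by (simp add: ttrans_tprod ttrans_ttrans tprod_assoc)
  have t2: "ttrans l (tprod n l (tprod p l X (ttrans l U)) ?P) = tprod p l (tprod n l ?P U) (ttrans l X)"
    using X U tP_sym[OF X] by (simp add: ttrans_tprod ttrans_ttrans tprod_assoc)
  have "ttrans l (tW n p l X U) = tscale (-1) (tW n p l X U)"
    unfolding tW_def ttrans_tsub t1 t2 by (simp add: tsub_def tscale_def fun_eq_iff)
  thus ?thesis using d unfolding skew_def by simp
qed

definition cayQ :: "nat \<Rightarrow> nat \<Rightarrow> tensor \<Rightarrow> tensor" where
  "cayQ n l W = tprod n l (tinv n l (tsub (tid n l) (tscale (1/2) W))) (tadd (tid n l) (tscale (1/2) W))"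

lemma tTransport_cayQ: "tTransport n p l X U V = tprod n l (cayQ n l (tW n p l X U)) V"
  unfolding tTransport_def cayQ_def ..

lemma tCayley_cayQ: "tCayley n p l X U = tprod n l (cayQ n l (tW n p l X U)) X"
  unfolding tCayley_def cayQ_def ..

lemma cayQ_dims: assumes "skew n l W" shows "tdims n n l (cayQ n l W)"
proof -
  have "tdims n n l W" using assms unfolding skew_def by simp
  thus ?thesis unfolding cayQ_def
    using tinv_props[OF cayley_invertible[OF assms]]
    by (intro tdims_tprod[of n n l _ n] tdims_tadd tdims_tid tdims_tscale) auto
qed

lemma tadd_tsub_aux: "tadd (tsub a b) (tsub b c) = tsub (tadd a b) (tadd b c)"
  by (simp add: tadd_def tsub_def fun_eq_iff)

lemma cayQ_orth:
  assumes W: "skew n l W"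
  shows "tprod n l (ttrans l (cayQ n l W)) (cayQ n l W) = tid n l"
proof -
  let ?H = "tscale (1/2) W"
  let ?A = "tsub (tid n l) ?H"
  let ?Bp = "tadd (tid n l) ?H"
  let ?G = "tinv n l ?A"
  have Wd: "tdims n n l W" and Wt: "ttrans l W = tscale (-1) W" using W unfolding skew_def by auto
  have Hd: "tdims n n l ?H" using tdims_tscale[OF Wd] .
  have Gp: "tdims n n l ?G" "tprod n l ?A ?G = tid n l" "tprod n l ?G ?A = tid n l"
    using tinv_props[OF cayley_invertible[OF W]] by auto
  have Ad: "tdims n n l ?A" using Hd by (intro tdims_tsub tdims_tid)
  have Bd: "tdims n n l ?Bp" using Hd by (intro tdims_tadd tdims_tid)
  have GTd: "tdims n n l (ttrans l ?G)" using tdims_ttrans[OF Gp(1)] .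
  have "ttrans l ?A = tsub (tid n l) (tscale (1/2) (tscale (-1) W))"
    by (simp only: ttrans_tsub ttrans_tid ttrans_tscale Wt)
  also have "\<dots> = ?Bp" by (simp add: tsub_def tadd_def tscale_def fun_eq_iff)
  finally have At: "ttrans l ?A = ?Bp" .
  have "ttrans l ?Bp = tadd (tid n l) (tscale (1/2) (tscale (-1) W))"
    by (simp only: ttrans_tadd ttrans_tid ttrans_tscale Wt)
  also have "\<dots> = ?A" by (simp add: tsub_def tadd_def tscale_def fun_eq_iff)
  finally have Bt: "ttrans l ?Bp = ?A" .
  have GTB: "tprod n l (ttrans l ?G) ?Bp = tid n l"
  proof -
    have "tprod n l (ttrans l ?G) ?Bp = ttrans l (tprod n l ?A ?G)"
      by (simp add: ttrans_tprod At Bt)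
    thus ?thesis using Gp(2) ttrans_tid by simp
  qed
  have BGT: "tprod n l ?Bp (ttrans l ?G) = tid n l"
  proof -
    have "tprod n l ?Bp (ttrans l ?G) = ttrans l (tprod n l ?G ?A)"
      by (simp add: ttrans_tprod At Bt)
    thus ?thesis using Gp(3) ttrans_tid by simp
  qed
  have comm: "tprod n l ?A ?Bp = tprod n l ?Bp ?A"
  proof -
    have "tprod n l ?A ?Bp = tsub (tadd (tid n l) ?H) (tadd ?H (tprod n l ?H ?H))"
      by (simp add: tadd_tsub_aux tprod_tsub_left tprod_tadd_right tid_left[OF Bd] tid_right[OF Hd] tid_left[OF Hd] tid_left[OF tdims_tid])
    moreover have "tprod n l ?Bp ?A = tsub (tadd (tid n l) ?H) (tadd ?H (tprod n l ?H ?H))"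
      by (simp add: tadd_tsub_aux tprod_tadd_left tprod_tsub_right tid_left[OF Ad] tid_right[OF Hd] tid_left[OF Hd] tid_left[OF tdims_tid])
    ultimately show ?thesis by simp
  qed
  have GTA: "tprod n l (ttrans l ?G) ?A = tprod n l ?A (ttrans l ?G)"
  proof -
    have "tprod n l (ttrans l ?G) ?A = tprod n l (ttrans l ?G) (tprod n l ?A (tprod n l ?Bp (ttrans l ?G)))"
      using BGT tid_right[OF Ad] by simp
    also have "\<dots> = tprod n l (ttrans l ?G) (tprod n l (tprod n l ?Bp ?A) (ttrans l ?G))"
    proof -
      have "tprod n l ?A (tprod n l ?Bp (ttrans l ?G)) = tprod n l (tprod n l ?Bp ?A) (ttrans l ?G)"
        by (simp only: tprod_assoc[symmetric] comm)
      thus ?thesis by simp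
    qed
    also have "\<dots> = tprod n l (tprod n l (tprod n l (ttrans l ?G) ?Bp) ?A) (ttrans l ?G)"
      by (simp add: tprod_assoc)
    also have "\<dots> = tprod n l ?A (ttrans l ?G)"
      using GTB tid_left[OF Ad] by simp
    finally show ?thesis .
  qed
  have "ttrans l (cayQ n l W) = tprod n l ?A (ttrans l ?G)"
    unfolding cayQ_def by (simp add: ttrans_tprod Bt)
  hence "tprod n l (ttrans l (cayQ n l W)) (cayQ n l W) = tprod n l (tprod n l ?A (ttrans l ?G)) (tprod n l ?G ?Bp)"
    unfolding cayQ_def by simp
  also have "\<dots> = tprod n l (tprod n l (ttrans l ?G) ?A) (tprod n l ?G ?Bp)" using GTA by simp
  also have "\<dots> = tprod n l (ttrans l ?G) (tprod n l (tprod n l ?A ?G) ?Bp)" by (simp add: tprod_assoc)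
  also have "\<dots> = tid n l" using Gp(2) tid_left[OF Bd] GTB by simp
  finally show ?thesis .
qed

lemma cayQ_stiefel:
  assumes W: "skew n l W" and Z: "Z \<in> tStiefel n p l"
  shows "tprod n l (cayQ n l W) Z \<in> tStiefel n p l"
proof -
  have Zd: "tdims n p l Z" and ZZ: "tprod n l (ttrans l Z) Z = tid p l" using Z unfolding tStiefel_def by auto
  have "tprod n l (ttrans l (tprod n l (cayQ n l W) Z)) (tprod n l (cayQ n l W) Z)
      = tprod n l (ttrans l Z) (tprod n l (tprod n l (ttrans l (cayQ n l W)) (cayQ n l W)) Z)"
    by (simp add: ttrans_tprod tprod_assoc)
  also have "\<dots> = tid p l" using cayQ_orth[OF W] tid_left[OF Zd] ZZ by simp
  finally show ?thesis unfolding tStiefel_def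
    using tdims_tprod[OF cayQ_dims[OF W] Zd] by simp
qed

lemma tprod_deriv:
  assumes "\<And>i j k. ((\<lambda>t. g t i j k) has_real_derivative V i j k) (at 0)"
  shows "((\<lambda>t. tprod m l Q (g t) i j k) has_real_derivative tprod m l Q V i j k) (at 0)"
proof (cases "k < l")
  case True
  show ?thesis unfolding tprod_def using True
    by (simp, intro DERIV_sum DERIV_cmult assms)
next
  case False thus ?thesis unfolding tprod_def by simp
qed

lemma transport_tangent:
  assumes W: "skew n l W" and V: "V \<in> tTangent n p l X"
  shows "tprod n l (cayQ n l W) V \<in> tTangent n p l (tprod n l (cayQ n l W) X)"
proof -
  obtain g where g: "\<forall>t. g t \<in> tStiefel n p l" "g 0 = X"
    "\<forall>i j k. ((\<lambda>t. g t i j k) has_real_derivative V i j k) (at 0)" and Vd: "tdims n p l V"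
    using V unfolding tTangent_def by blast
  let ?g = "\<lambda>t. tprod n l (cayQ n l W) (g t)"
  have 1: "\<forall>t. ?g t \<in> tStiefel n p l" using cayQ_stiefel[OF W] g(1) by blast
  have 2: "?g 0 = tprod n l (cayQ n l W) X" using g(2) by simp
  have 3: "\<forall>i j k. ((\<lambda>t. ?g t i j k) has_real_derivative tprod n l (cayQ n l W) V i j k) (at 0)"
    using tprod_deriv g(3) by blast
  have 4: "tdims n p l (tprod n l (cayQ n l W) V)" using tdims_tprod[OF cayQ_dims[OF W] Vd] .
  show ?thesis unfolding tTangent_def mem_Collect_eq
    by (intro conjI 4 exI[where x = ?g] 1 2 3)
qed

lemma transport_isometry:
  assumes W: "skew n l W" and Vd: "tdims n p l V"
  shows "tinner n p l (tprod n l (cayQ n l W) V) (tprod n l (cayQ n l W) V) = tinner n p l V V"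
proof (cases "l = 0")
  case True thus ?thesis by (simp add: tinner_def)
next
  case False
  hence l: "0 < l" by simp
  have "tprod n l (ttrans l (tprod n l (cayQ n l W) V)) (tprod n l (cayQ n l W) V)
      = tprod n l (ttrans l V) (tprod n l (tprod n l (ttrans l (cayQ n l W)) (cayQ n l W)) V)"
    by (simp add: ttrans_tprod tprod_assoc)
  also have "\<dots> = tprod n l (ttrans l V) V" using cayQ_orth[OF W] tid_left[OF Vd] by simp
  finally show ?thesis using tinner_ttr[OF l] by simp
qed

lemma tinv_tid: "tinv n l (tid n l) = tid n l"
proof -
  have inv: "tinvertible n l (tid n l)" unfolding tinvertible_def
    using tdims_tid tid_left[OF tdims_tid] by blast
  have P: "tdims n n l (tinv n l (tid n l))" "tprod n l (tid n l) (tinv n l (tid n l)) = tid n l"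
    using tinv_props[OF inv] by auto
  thus ?thesis using tid_left[OF P(1)] by simp
qed

lemma tW_zero: "tW n p l X (\<lambda>i j k. 0) = (\<lambda>i j k. 0)"
  unfolding tW_def by (simp add: tprod_zero_left tprod_zero_right ttrans_zero tsub_def)

lemma transport_zero:
  assumes Vd: "tdims n p l V"
  shows "tTransport n p l X (\<lambda>i j k. 0) V = V"
proof -
  have "tsub (tid n l) (tscale (1/2) (\<lambda>i j k. 0)) = tid n l" by (simp add: tsub_def tscale_def)
  moreover have "tadd (tid n l) (tscale (1/2) (\<lambda>i j k. 0)) = tid n l" by (simp add: tadd_def tscale_def)
  ultimately show ?thesis unfolding tTransport_def tW_zero
    using tinv_tid tid_left[OF tdims_tid] tid_left[OF Vd] by simp
qed

type_synonym coords = "nat \<times> nat \<times> nat \<times> nat \<Rightarrow> real"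

definition Az :: "nat \<Rightarrow> nat \<Rightarrow> nat \<Rightarrow> coords \<Rightarrow> tensor" where
  "Az n p l z = tsub (tid n l) (tscale (1/2) (tW n p l (unpack 0 z) (unpack 1 z)))"

definition Gz :: "nat \<Rightarrow> nat \<Rightarrow> nat \<Rightarrow> coords \<Rightarrow> tensor" where
  "Gz n p l z = tinv n l (Az n p l z)"

inductive_set PolyS :: "(coords \<Rightarrow> real) set" where
  pconst: "(\<lambda>z. c) \<in> PolyS"
| pcoord: "(\<lambda>z. z c) \<in> PolyS"
| padd: "f \<in> PolyS \<Longrightarrow> g \<in> PolyS \<Longrightarrow> (\<lambda>z. f z + g z) \<in> PolyS"
| pmul: "f \<in> PolyS \<Longrightarrow> g \<in> PolyS \<Longrightarrow> (\<lambda>z. f z * g z) \<in> PolyS"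

inductive_set Alg :: "nat \<Rightarrow> nat \<Rightarrow> nat \<Rightarrow> (coords \<Rightarrow> real) set" for n p l where
  apoly: "f \<in> PolyS \<Longrightarrow> f \<in> Alg n p l"
| ainv: "(\<lambda>z. Gz n p l z a b k) \<in> Alg n p l"
| aadd: "f \<in> Alg n p l \<Longrightarrow> g \<in> Alg n p l \<Longrightarrow> (\<lambda>z. f z + g z) \<in> Alg n p l"
| amul: "f \<in> Alg n p l \<Longrightarrow> g \<in> Alg n p l \<Longrightarrow> (\<lambda>z. f z * g z) \<in> Alg n p l"

definition rcl :: "(coords \<Rightarrow> real) set \<Rightarrow> bool" where
  "rcl S \<longleftrightarrow> (\<forall>c. (\<lambda>z. c) \<in> S) \<and> (\<forall>c. (\<lambda>z. z c) \<in> S) \<and>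
     (\<forall>f\<in>S. \<forall>g\<in>S. (\<lambda>z. f z + g z) \<in> S) \<and> (\<forall>f\<in>S. \<forall>g\<in>S. (\<lambda>z. f z * g z) \<in> S)"

lemma rcl_Poly: "rcl PolyS"
  unfolding rcl_def by (auto intro: PolyS.intros)

lemma rcl_Alg: "rcl (Alg n p l)"
  unfolding rcl_def by (auto intro: Alg.intros PolyS.intros)

lemma rcl_const: "rcl S \<Longrightarrow> (\<lambda>z. c) \<in> S" unfolding rcl_def by blast
lemma rcl_coord: "rcl S \<Longrightarrow> (\<lambda>z. z c) \<in> S" unfolding rcl_def by blast
lemma rcl_add: "rcl S \<Longrightarrow> f \<in> S \<Longrightarrow> g \<in> S \<Longrightarrow> (\<lambda>z. f z + g z) \<in> S" unfolding rcl_def by blast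
lemma rcl_mul: "rcl S \<Longrightarrow> f \<in> S \<Longrightarrow> g \<in> S \<Longrightarrow> (\<lambda>z. f z * g z) \<in> S" unfolding rcl_def by blast
lemma rcl_cmul: "rcl S \<Longrightarrow> f \<in> S \<Longrightarrow> (\<lambda>z. c * f z) \<in> S"
  using rcl_mul[OF _ rcl_const] by blast
lemma rcl_sub: "rcl S \<Longrightarrow> f \<in> S \<Longrightarrow> g \<in> S \<Longrightarrow> (\<lambda>z. f z - g z) \<in> S"
  using rcl_add[of S f "\<lambda>z. (-1) * g z"] rcl_cmul[of S g "-1"] by simp

lemma rcl_sum: assumes "rcl S" "\<And>x. x \<in> A \<Longrightarrow> (\<lambda>z. F x z) \<in> S"
  shows "(\<lambda>z. \<Sum>x\<in>A. F x z) \<in> S"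
  using assms(2)
proof (induction A rule: infinite_finite_induct)
  case (infinite A) thus ?case using rcl_const[OF assms(1)] by simp
next
  case empty thus ?case using rcl_const[OF assms(1)] by simp
next
  case (insert x A) thus ?case using rcl_add[OF assms(1)] by simp
qed

definition tin :: "(coords \<Rightarrow> real) set \<Rightarrow> (coords \<Rightarrow> tensor) \<Rightarrow> bool" where
  "tin S T \<longleftrightarrow> (\<forall>i j k. (\<lambda>z. T z i j k) \<in> S)"

lemma tin_tprod: assumes S: "rcl S" and F: "tin S F" and H: "tin S H"
  shows "tin S (\<lambda>z. tprod m l (F z) (H z))"
  unfolding tin_def
proof (intro allI)
  fix i j k
  show "(\<lambda>z. tprod m l (F z) (H z) i j k) \<in> S"
  proof (cases "k < l")
    case True
    have "(\<lambda>z. \<Sum>r<m. \<Sum>s<l. F z i r ((k + l - s) mod l) * H z r j s) \<in> S"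
      using F H unfolding tin_def by (intro rcl_sum[OF S] rcl_mul[OF S]) auto
    thus ?thesis using True unfolding tprod_def by simp
  next
    case False thus ?thesis unfolding tprod_def using rcl_const[OF S] by simp
  qed
qed

lemma tin_tadd: "rcl S \<Longrightarrow> tin S F \<Longrightarrow> tin S H \<Longrightarrow> tin S (\<lambda>z. tadd (F z) (H z))"
  unfolding tin_def tadd_def using rcl_add by blast
lemma tin_tsub: "rcl S \<Longrightarrow> tin S F \<Longrightarrow> tin S H \<Longrightarrow> tin S (\<lambda>z. tsub (F z) (H z))"
  unfolding tin_def tsub_def using rcl_sub by blast
lemma tin_tscale: "rcl S \<Longrightarrow> tin S F \<Longrightarrow> tin S (\<lambda>z. tscale c (F z))"
  unfolding tin_def tscale_def using rcl_cmul by blast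
lemma tin_const: "rcl S \<Longrightarrow> tin S (\<lambda>z. T)"
  unfolding tin_def using rcl_const by blast
lemma tin_unpack: "rcl S \<Longrightarrow> tin S (\<lambda>z. unpack t z)"
  unfolding tin_def unpack_def using rcl_coord by blast
lemma tin_ttrans: assumes S: "rcl S" and F: "tin S F" shows "tin S (\<lambda>z. ttrans l (F z))"
  unfolding tin_def
proof (intro allI)
  fix i j k
  show "(\<lambda>z. ttrans l (F z) i j k) \<in> S"
    using F rcl_const[OF S] unfolding tin_def ttrans_def by (cases "k < l") auto
qed

lemma tin_tP: "rcl S \<Longrightarrow> tin S F \<Longrightarrow> tin S (\<lambda>z. tP n p l (F z))"
  unfolding tP_def by (intro tin_tsub tin_const tin_tscale tin_tprod tin_ttrans)

lemma tin_tW: "rcl S \<Longrightarrow> tin S F \<Longrightarrow> tin S H \<Longrightarrow> tin S (\<lambda>z. tW n p l (F z) (H z))"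
  unfolding tW_def by (intro tin_tsub tin_tprod tin_tP tin_ttrans)

lemma tin_Az: "rcl S \<Longrightarrow> tin S (Az n p l)"
  unfolding Az_def[abs_def] by (intro tin_tsub tin_const tin_tscale tin_tW tin_unpack)

lemma tin_Gz: "tin (Alg n p l) (Gz n p l)"
  unfolding tin_def by (auto intro: Alg.ainv)

lemma Poly_Alg: "f \<in> PolyS \<Longrightarrow> f \<in> Alg n p l" by (rule Alg.apoly)

lemma tin_mono: "tin S F \<Longrightarrow> S \<subseteq> S' \<Longrightarrow> tin S' F"
  unfolding tin_def by blast

lemma tin_transport: "tin (Alg n p l) (\<lambda>z. tTransport n p l (unpack 0 z) (unpack 1 z) (unpack 2 z))"
proof -
  have "(\<lambda>z. tTransport n p l (unpack 0 z) (unpack 1 z) (unpack 2 z)) =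
        (\<lambda>z. tprod n l (tprod n l (Gz n p l z) (tadd (tid n l) (tscale (1/2) (tW n p l (unpack 0 z) (unpack 1 z))))) (unpack 2 z))"
    unfolding tTransport_def Gz_def Az_def ..
  moreover have "tin (Alg n p l) \<dots>"
    using rcl_Alg by (intro tin_tprod tin_Gz tin_tadd tin_const tin_tscale tin_tW tin_unpack)
  ultimately show ?thesis by simp
qed

lemma unpack_dims: "z \<in> coord_space (triple_coords n p l) \<Longrightarrow> tdims n p l (unpack t z)"
  unfolding coord_space_def triple_coords_def tdims_def unpack_def by auto

lemma Az_skewW: "z \<in> coord_space (triple_coords n p l) \<Longrightarrow> skew n l (tW n p l (unpack 0 z) (unpack 1 z))"
  by (intro tW_skew unpack_dims)

lemma Az_dims: "z \<in> coord_space (triple_coords n p l) \<Longrightarrow> tdims n n l (Az n p l z)"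
  unfolding Az_def using Az_skewW unfolding skew_def by (intro tdims_tsub tdims_tid tdims_tscale) auto

lemma Gz_props:
  assumes "z \<in> coord_space (triple_coords n p l)"
  shows "tdims n n l (Gz n p l z)" "tprod n l (Az n p l z) (Gz n p l z) = tid n l"
        "tprod n l (Gz n p l z) (Az n p l z) = tid n l"
  using tinv_props[OF cayley_invertible[OF Az_skewW[OF assms]]]
  unfolding Gz_def Az_def by auto

lemma G_diff:
  assumes y: "y \<in> coord_space (triple_coords n p l)" and y': "y' \<in> coord_space (triple_coords n p l)"
  shows "tsub (Gz n p l y) (Gz n p l y') =
         tprod n l (tprod n l (Gz n p l y) (tsub (Az n p l y') (Az n p l y))) (Gz n p l y')"
proof -
  note P = Gz_props[OF y] and P' = Gz_props[OF y']
  have "tprod n l (tprod n l (Gz n p l y) (tsub (Az n p l y') (Az n p l y))) (Gz n p l y')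
      = tsub (tprod n l (Gz n p l y) (tprod n l (Az n p l y') (Gz n p l y')))
             (tprod n l (tprod n l (Gz n p l y) (Az n p l y)) (Gz n p l y'))"
    by (simp only: tprod_tsub_right tprod_tsub_left tprod_assoc)
  also have "\<dots> = tsub (Gz n p l y) (Gz n p l y')"
    using P(3) P'(2) tid_right[OF P(1)] tid_left[OF P'(1)] by simp
  finally show ?thesis by simp
qed

lemma tinner_tsub_left: "tinner n p l (tsub X Y) B = tinner n p l X B - tinner n p l Y B"
  unfolding tinner_def tsub_def by (simp add: left_diff_distrib sum_subtractf)

lemma tinner_nonneg: "0 \<le> tinner n p l A A"
  unfolding tinner_def by (intro sum_nonneg) auto

lemma tinner_expand: "tinner n p l (tsub X Y) (tsub X Y) = tinner n p l X X - 2 * tinner n p l X Y + tinner n p l Y Y"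
  by (simp add: tinner_tsub_left tinner_tsub_right tinner_sym[of n p l Y X])

lemma G_bound:
  assumes y: "y \<in> coord_space (triple_coords n p l)" and M: "tdims n q l M"
  shows "tinner n q l (tprod n l (Gz n p l y) M) (tprod n l (Gz n p l y) M) \<le> tinner n q l M M"
proof -
  note P = Gz_props[OF y]
  let ?B = "tprod n l (Gz n p l y) M"
  have Bd: "tdims n q l ?B" using tdims_tprod[OF P(1) M] .
  have AB: "tprod n l (Az n p l y) ?B = M"
    using P(2) tid_left[OF M] by (simp add: tprod_assoc[symmetric])
  have i1: "tinner n q l ?B (tprod n l (Az n p l y) ?B) = tinner n q l ?B ?B"
    using inner_cayley[OF Az_skewW[OF y] Bd] unfolding Az_def .
  have "0 \<le> tinner n q l (tsub (tprod n l (Az n p l y) ?B) ?B) (tsub (tprod n l (Az n p l y) ?B) ?B)"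
    by (rule tinner_nonneg)
  also have "\<dots> = tinner n q l M M - tinner n q l ?B ?B"
    unfolding tinner_expand using i1 AB tinner_sym[of n q l ?B M] by simp
  finally show ?thesis by simp
qed

lemma entry_le_tinner:
  assumes "a < n" "b < q" "k < l"
  shows "(Y a b k)^2 \<le> tinner n q l Y Y"
proof -
  have "(Y a b k)^2 = Y a b k * Y a b k" by (simp add: power2_eq_square)
  also have "\<dots> \<le> (\<Sum>k<l. Y a b k * Y a b k)"
    by (rule member_le_sum) (use assms in auto)
  also have "\<dots> \<le> (\<Sum>j<q. \<Sum>k<l. Y a j k * Y a j k)"
    by (rule member_le_sum[where f="\<lambda>j. \<Sum>k<l. Y a j k * Y a j k"]) (use assms in \<open>auto intro: sum_nonneg\<close>)
  also have "\<dots> \<le> (\<Sum>i<n. \<Sum>j<q. \<Sum>k<l. Y i j k * Y i j k)"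
    by (rule member_le_sum[where f="\<lambda>i. \<Sum>j<q. \<Sum>k<l. Y i j k * Y i j k"]) (use assms in \<open>auto intro!: sum_nonneg\<close>)
  finally show ?thesis unfolding tinner_def .
qed

lemma tinner_tendsto0:
  assumes "\<And>i j k. ((\<lambda>x. E x i j k) \<longlongrightarrow> 0) F"
  shows "((\<lambda>x. tinner n q l (E x) (E x)) \<longlongrightarrow> 0) F"
proof -
  have "((\<lambda>x. tinner n q l (E x) (E x)) \<longlongrightarrow> (\<Sum>i<n. \<Sum>j<q. \<Sum>k<l. 0 * 0)) F"
    unfolding tinner_def by (intro tendsto_sum tendsto_mult assms)
  thus ?thesis by simp
qed

lemma tprod_tendsto:
  assumes "\<And>i j k. ((\<lambda>x. Fx x i j k) \<longlongrightarrow> F0 i j k) F"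
      and "\<And>i j k. ((\<lambda>x. Hx x i j k) \<longlongrightarrow> H0 i j k) F"
  shows "((\<lambda>x. tprod m l (Fx x) (Hx x) i j k) \<longlongrightarrow> tprod m l F0 H0 i j k) F"
  unfolding tprod_def by (cases "k < l") (simp_all, intro tendsto_sum tendsto_mult assms)

lemma upd_in: "z \<in> coord_space C \<Longrightarrow> c \<in> C \<Longrightarrow> z(c := v) \<in> coord_space C"
  unfolding coord_space_def by auto

lemma G_tendsto:
  assumes z: "z \<in> coord_space (triple_coords n p l)"
    and ev: "eventually (\<lambda>x. w x \<in> coord_space (triple_coords n p l)) F"
    and A: "\<And>i j k. ((\<lambda>x. Az n p l (w x) i j k) \<longlongrightarrow> Az n p l z i j k) F"
  shows "((\<lambda>x. Gz n p l (w x) a b k) \<longlongrightarrow> Gz n p l z a b k) F"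
proof (cases "a < n \<and> b < n \<and> k < l")
  case False
  have "eventually (\<lambda>x. Gz n p l (w x) a b k = Gz n p l z a b k) F"
    using ev
  proof (rule eventually_mono)
    fix x assume "w x \<in> coord_space (triple_coords n p l)"
    thus "Gz n p l (w x) a b k = Gz n p l z a b k"
      using tdimsD[OF Gz_props(1)] z False by (metis not_less)
  qed
  thus ?thesis by (rule tendsto_eventually)
next
  case True
  let ?E = "\<lambda>x. tprod n l (tsub (Az n p l z) (Az n p l (w x))) (Gz n p l z)"
  let ?d = "\<lambda>x. Gz n p l (w x) a b k - Gz n p l z a b k"
  have E0: "((\<lambda>x. ?E x i j k) \<longlongrightarrow> 0) F" for i j k
  proof -
    have "((\<lambda>x. ?E x i j k) \<longlongrightarrow> tprod n l (tsub (Az n p l z) (Az n p l z)) (Gz n p l z) i j k) F"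
      apply (rule tprod_tendsto)
      subgoal for i j k unfolding tsub_def by (intro tendsto_diff tendsto_const A)
      by (rule tendsto_const)
    moreover have "tsub (Az n p l z) (Az n p l z) = (\<lambda>i j k. 0)" by (simp add: tsub_def)
    ultimately show ?thesis by (simp add: tprod_zero_left)
  qed
  have T: "((\<lambda>x. tinner n n l (?E x) (?E x)) \<longlongrightarrow> 0) F" by (rule tinner_tendsto0) (rule E0)
  have bnd: "eventually (\<lambda>x. (?d x)^2 \<le> tinner n n l (?E x) (?E x)) F"
    using ev
  proof (rule eventually_mono)
    fix x assume wx: "w x \<in> coord_space (triple_coords n p l)"
    have Ed: "tdims n n l (?E x)"
      by (intro tdims_tprod[OF tdims_tsub[OF Az_dims[OF z] Az_dims[OF wx]] Gz_props(1)[OF z]])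
    have "?d x = tsub (Gz n p l (w x)) (Gz n p l z) a b k" by (simp add: tsub_def)
    also have "\<dots> = tprod n l (Gz n p l (w x)) (?E x) a b k"
      by (simp add: G_diff[OF wx z] tprod_assoc)
    finally have "(?d x)^2 = (tprod n l (Gz n p l (w x)) (?E x) a b k)^2" by simp
    also have "\<dots> \<le> tinner n n l (tprod n l (Gz n p l (w x)) (?E x)) (tprod n l (Gz n p l (w x)) (?E x))"
      using True by (intro entry_le_tinner) auto
    also have "\<dots> \<le> tinner n n l (?E x) (?E x)" by (rule G_bound[OF wx Ed])
    finally show "(?d x)^2 \<le> tinner n n l (?E x) (?E x)" .
  qed
  have "((\<lambda>x. (?d x)^2) \<longlongrightarrow> 0) F"
    by (rule real_tendsto_sandwich[where f="\<lambda>x. 0" and h="\<lambda>x. tinner n n l (?E x) (?E x)"])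
       (use bnd T in auto)
  hence "((\<lambda>x. sqrt ((?d x)^2)) \<longlongrightarrow> sqrt 0) F" by (rule tendsto_real_sqrt)
  hence "((\<lambda>x. \<bar>?d x\<bar>) \<longlongrightarrow> 0) F" by simp
  hence "(?d \<longlongrightarrow> 0) F" by (simp only: tendsto_rabs_zero_iff)
  thus ?thesis by (rule LIM_zero_cancel)
qed

lemma Poly_tendsto:
  assumes "f \<in> PolyS" and "\<And>c. ((\<lambda>x. w x c) \<longlongrightarrow> z c) F"
  shows "((\<lambda>x. f (w x)) \<longlongrightarrow> f z) F"
  using assms(1) by (induction rule: PolyS.induct) (auto intro: tendsto_add tendsto_mult assms(2))

lemma Poly_deriv:
  assumes "f \<in> PolyS"
  shows "\<exists>g\<in>PolyS. \<forall>z. ((\<lambda>t. f (z(c := z c + t))) has_real_derivative g z) (at 0)"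
  using assms
proof (induction rule: PolyS.induct)
  case (pconst a)
  show ?case by (intro bexI[of _ "\<lambda>z. 0"] allI PolyS.pconst) simp
next
  case (pcoord c')
  show ?case
  proof (cases "c' = c")
    case True
    show ?thesis using True
      by (intro bexI[of _ "\<lambda>z. 1"] allI PolyS.pconst) (auto intro!: derivative_eq_intros)
  next
    case False
    show ?thesis using False
      by (intro bexI[of _ "\<lambda>z. 0"] allI PolyS.pconst) simp
  qed
next
  case (padd f g)
  then obtain f' g' where "f' \<in> PolyS" "g' \<in> PolyS"
    "\<forall>z. ((\<lambda>t. f (z(c := z c + t))) has_real_derivative f' z) (at 0)"
    "\<forall>z. ((\<lambda>t. g (z(c := z c + t))) has_real_derivative g' z) (at 0)" by blast
  hence fg: "f' \<in> PolyS" "g' \<in> PolyS"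
    "\<forall>z. ((\<lambda>t. f (z(c := z c + t))) has_real_derivative f' z) (at 0)"
    "\<forall>z. ((\<lambda>t. g (z(c := z c + t))) has_real_derivative g' z) (at 0)" by blast+
  have der: "((\<lambda>t. f (z(c := z c + t)) + g (z(c := z c + t))) has_real_derivative f' z + g' z) (at 0)" for z
    using DERIV_add[OF fg(3)[rule_format, of z] fg(4)[rule_format, of z]] by simp
  show ?case
  proof (intro bexI[of _ "\<lambda>z. f' z + g' z"] allI)
    fix z show "((\<lambda>t. f (z(c := z c + t)) + g (z(c := z c + t))) has_real_derivative f' z + g' z) (at 0)"
      by (rule der)
  next
    show "(\<lambda>z. f' z + g' z) \<in> PolyS" using fg(1,2) by (rule PolyS.padd)
  qed
next
  case (pmul f g)
  then obtain f' g' where fg: "f' \<in> PolyS" "g' \<in> PolyS"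
    "\<forall>z. ((\<lambda>t. f (z(c := z c + t))) has_real_derivative f' z) (at 0)"
    "\<forall>z. ((\<lambda>t. g (z(c := z c + t))) has_real_derivative g' z) (at 0)" by blast
  have der: "((\<lambda>t. f (z(c := z c + t)) * g (z(c := z c + t))) has_real_derivative f' z * g z + g' z * f z) (at 0)" for z
    using DERIV_mult[OF fg(3)[rule_format, of z] fg(4)[rule_format, of z]] by simp
  show ?case
  proof (intro bexI[of _ "\<lambda>z. f' z * g z + g' z * f z"] allI)
    fix z show "((\<lambda>t. f (z(c := z c + t)) * g (z(c := z c + t))) has_real_derivative f' z * g z + g' z * f z) (at 0)"
      by (rule der)
  next
    show "(\<lambda>z. f' z * g z + g' z * f z) \<in> PolyS" using fg(1,2) pmul.hyps
      by (intro PolyS.padd PolyS.pmul)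
  qed
qed

lemma line_tendsto: "((\<lambda>t::real. (z(c := z c + t)) c') \<longlongrightarrow> z c') (at 0)"
proof (cases "c' = c")
  case True
  have "((\<lambda>t::real. z c + t) \<longlongrightarrow> z c + 0) (at 0)" by (intro tendsto_intros)
  thus ?thesis using True by simp
next
  case False thus ?thesis by simp
qed

definition nbF :: "'c set \<Rightarrow> ('c \<Rightarrow> real) set \<Rightarrow> ('c \<Rightarrow> real) \<Rightarrow> ('c \<Rightarrow> real) filter" where
  "nbF C D z = (INF e\<in>{0<..}. principal {w\<in>D. \<forall>c\<in>C. \<bar>w c - z c\<bar> < e})"

lemma nbF_D: "eventually (\<lambda>w. w \<in> D) (nbF C D z)"
  unfolding nbF_def by (rule eventually_INF1[of 1]) (auto simp: eventually_principal)

lemma nbF_coord: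
  assumes "D \<subseteq> coord_space C" "z \<in> D"
  shows "((\<lambda>w. w c) \<longlongrightarrow> z c) (nbF C D z)"
proof (cases "c \<in> C")
  case True
  show ?thesis unfolding tendsto_iff
  proof (intro allI impI)
    fix e :: real assume "0 < e"
    show "eventually (\<lambda>w. dist (w c) (z c) < e) (nbF C D z)"
      unfolding nbF_def using \<open>0 < e\<close> True
      by (intro eventually_INF1[of e]) (auto simp: eventually_principal dist_real_def)
  qed
next
  case False
  have "eventually (\<lambda>w. w c = z c) (nbF C D z)"
    using nbF_D[of D C z]
  proof (rule eventually_mono)
    fix w assume "w \<in> D"
    hence "w \<in> coord_space C" "z \<in> coord_space C" using assms by auto
    thus "w c = z c" using False unfolding coord_space_def by simp
  qed
  thus ?thesis by (rule tendsto_eventually)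
qed

lemma coord_cont_nbF:
  assumes "\<And>z. z \<in> D \<Longrightarrow> (f \<longlongrightarrow> f z) (nbF C D z)"
  shows "coord_cont C D f"
  unfolding coord_cont_def
proof (intro ballI allI impI)
  fix z e assume z: "z \<in> D" and e: "(0::real) < e"
  have ev: "eventually (\<lambda>w. dist (f w) (f z) < e) (nbF C D z)"
    using assms[OF z] e unfolding tendsto_iff by blast
  have base: "eventually P (nbF C D z) \<longleftrightarrow>
      (\<exists>b\<in>{0<..}. eventually P (principal {w\<in>D. \<forall>c\<in>C. \<bar>w c - z c\<bar> < b}))" for P
    unfolding nbF_def
  proof (rule eventually_INF_base)
    show "{0::real<..} \<noteq> {}" by auto
    fix a b :: real assume "a \<in> {0<..}" "b \<in> {0<..}"
    thus "\<exists>x\<in>{0<..}. principal {w\<in>D. \<forall>c\<in>C. \<bar>w c - z c\<bar> < x} \<le>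
        inf (principal {w\<in>D. \<forall>c\<in>C. \<bar>w c - z c\<bar> < a}) (principal {w\<in>D. \<forall>c\<in>C. \<bar>w c - z c\<bar> < b})"
      by (intro bexI[of _ "min a b"]) (auto simp: inf_principal)
  qed
  obtain d where d: "d > 0" "\<forall>w\<in>{w\<in>D. \<forall>c\<in>C. \<bar>w c - z c\<bar> < d}. dist (f w) (f z) < e"
    using ev[unfolded base] by (auto simp: eventually_principal)
  show "\<exists>\<delta>>0. \<forall>w\<in>D. (\<forall>c\<in>C. \<bar>w c - z c\<bar> < \<delta>) \<longrightarrow> \<bar>f w - f z\<bar> < e"
    using d by (intro exI[of _ d]) (auto simp: dist_real_def)
qed

abbreviation "CC n p l \<equiv> triple_coords n p l"
abbreviation "DD n p l \<equiv> coord_space (triple_coords n p l)"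

lemma Alg_tendsto:
  assumes "f \<in> Alg n p l" "z \<in> DD n p l"
  shows "(f \<longlongrightarrow> f z) (nbF (CC n p l) (DD n p l) z)"
  using assms(1)
proof (induction rule: Alg.induct)
  case (apoly f)
  show ?case using Poly_tendsto[OF apoly, where w="\<lambda>w. w" and z=z] nbF_coord[OF _ assms(2)] by simp
next
  case (ainv a b k)
  have A: "((\<lambda>w. Az n p l w i j k) \<longlongrightarrow> Az n p l z i j k) (nbF (CC n p l) (DD n p l) z)" for i j k
    using Poly_tendsto[where f="\<lambda>w. Az n p l w i j k" and w="\<lambda>w. w" and z=z] tin_Az[OF rcl_Poly] nbF_coord[OF _ assms(2)]
    unfolding tin_def by simp
  show ?case
    by (rule G_tendsto[where w="\<lambda>w. w"]) (use assms(2) nbF_D A in auto)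
next
  case (aadd f g) thus ?case by (intro tendsto_add)
next
  case (amul f g) thus ?case by (intro tendsto_mult)
qed

lemma inv_div_aux: "(1/t) * (a - b) = - ((b - a) / (t::real))"
  by (simp add: divide_inverse algebra_simps)

lemma G_deriv:
  assumes z: "z \<in> DD n p l" and c: "c \<in> CC n p l"
    and dA: "\<And>i j k. ((\<lambda>t. Az n p l (z(c := z c + t)) i j k) has_real_derivative dA i j k) (at 0)"
  shows "((\<lambda>t. Gz n p l (z(c := z c + t)) a b k) has_real_derivative
           tprod n l (tprod n l (Gz n p l z) (tscale (-1) dA)) (Gz n p l z) a b k) (at 0)"
proof -
  define zt where "zt = (\<lambda>t::real. z(c := z c + t))"
  have ztD: "zt t \<in> DD n p l" for t unfolding zt_def using upd_in[OF z c] .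
  have z0: "zt 0 = z" unfolding zt_def by simp
  have Ad: "((\<lambda>t. (Az n p l (zt t) i j k - Az n p l z i j k) / t) \<longlongrightarrow> dA i j k) (at 0)" for i j k
    using dA[of i j k] unfolding has_field_derivative_iff zt_def by simp
  have Gt: "((\<lambda>t. Gz n p l (zt t) i j k) \<longlongrightarrow> Gz n p l z i j k) (at 0)" for i j k
  proof (rule G_tendsto[OF z])
    show "eventually (\<lambda>t. zt t \<in> DD n p l) (at 0)" using ztD by simp
    fix i j k
    have "((\<lambda>t. Az n p l (zt t) i j k) \<longlongrightarrow> Az n p l z i j k) (at 0)"
    proof (rule Poly_tendsto[where f="\<lambda>w. Az n p l w i j k" and w=zt and z=z])
      show "(\<lambda>w. Az n p l w i j k) \<in> PolyS" using tin_Az[OF rcl_Poly] unfolding tin_def by blast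
      fix c' show "((\<lambda>t. zt t c') \<longlongrightarrow> z c') (at 0)" unfolding zt_def by (rule line_tendsto)
    qed
    thus "((\<lambda>t. Az n p l (zt t) i j k) \<longlongrightarrow> Az n p l z i j k) (at 0)" .
  qed
  have M: "((\<lambda>t. tscale (1/t) (tsub (Az n p l z) (Az n p l (zt t))) i j k) \<longlongrightarrow> tscale (-1) dA i j k) (at 0)" for i j k
  proof -
    have "((\<lambda>t. - ((Az n p l (zt t) i j k - Az n p l z i j k) / t)) \<longlongrightarrow> - dA i j k) (at 0)"
      using Ad by (rule tendsto_minus)
    moreover have "- ((Az n p l (zt t) i j k - Az n p l z i j k) / t) = (Az n p l z i j k - Az n p l (zt t) i j k) / t" for t
      by (simp add: minus_divide_left)
    ultimately have "((\<lambda>t. (Az n p l z i j k - Az n p l (zt t) i j k) / t) \<longlongrightarrow> - dA i j k) (at 0)" by simp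
    thus ?thesis by (simp add: tscale_def tsub_def)
  qed
  have lim: "((\<lambda>t. tprod n l (tprod n l (Gz n p l (zt t)) (tscale (1/t) (tsub (Az n p l z) (Az n p l (zt t))))) (Gz n p l z) a b k)
      \<longlongrightarrow> tprod n l (tprod n l (Gz n p l z) (tscale (-1) dA)) (Gz n p l z) a b k) (at 0)"
    by (intro tprod_tendsto Gt M tendsto_const)
  have eq: "(Gz n p l (zt t) a b k - Gz n p l (zt 0) a b k) / (t - 0) =
      tprod n l (tprod n l (Gz n p l (zt t)) (tscale (1/t) (tsub (Az n p l z) (Az n p l (zt t))))) (Gz n p l z) a b k" for t
  proof -
    have "tsub (Gz n p l (zt t)) (Gz n p l z) = tprod n l (tprod n l (Gz n p l (zt t)) (tsub (Az n p l z) (Az n p l (zt t)))) (Gz n p l z)"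
      by (rule G_diff[OF ztD z])
    hence "tscale (1/t) (tsub (Gz n p l (zt t)) (Gz n p l z)) =
        tprod n l (tprod n l (Gz n p l (zt t)) (tscale (1/t) (tsub (Az n p l z) (Az n p l (zt t))))) (Gz n p l z)"
      by (simp add: tprod_tscale_left tprod_tscale_right)
    hence "tscale (1/t) (tsub (Gz n p l (zt t)) (Gz n p l z)) a b k =
        tprod n l (tprod n l (Gz n p l (zt t)) (tscale (1/t) (tsub (Az n p l z) (Az n p l (zt t))))) (Gz n p l z) a b k"
      by simp
    thus ?thesis using z0 by (simp add: tscale_def tsub_def)
  qed
  have "((\<lambda>t. Gz n p l (zt t) a b k) has_real_derivative
           tprod n l (tprod n l (Gz n p l z) (tscale (-1) dA)) (Gz n p l z) a b k) (at 0)"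
    unfolding has_field_derivative_iff using lim eq by simp
  thus ?thesis unfolding zt_def .
qed

lemma Alg_deriv:
  assumes "f \<in> Alg n p l" and c: "c \<in> CC n p l"
  shows "\<exists>g\<in>Alg n p l. \<forall>z\<in>DD n p l. ((\<lambda>t. f (z(c := z c + t))) has_real_derivative g z) (at 0)"
  using assms(1)
proof (induction rule: Alg.induct)
  case (apoly f)
  obtain g where g: "g \<in> PolyS" "\<forall>z. ((\<lambda>t. f (z(c := z c + t))) has_real_derivative g z) (at 0)"
    using Poly_deriv[OF apoly] by blast
  show ?case using g Alg.apoly by blast
next
  case (ainv a b k)
  have "\<forall>x. \<exists>g. g \<in> PolyS \<and> (\<forall>z. ((\<lambda>t. Az n p l (z(c := z c + t)) (fst x) (fst (snd x)) (snd (snd x))) has_real_derivative g z) (at 0))"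
  proof
    fix x
    have "(\<lambda>w. Az n p l w (fst x) (fst (snd x)) (snd (snd x))) \<in> PolyS"
      using tin_Az[OF rcl_Poly] unfolding tin_def by blast
    from Poly_deriv[OF this, of c] show "\<exists>g. g \<in> PolyS \<and> (\<forall>z. ((\<lambda>t. Az n p l (z(c := z c + t)) (fst x) (fst (snd x)) (snd (snd x))) has_real_derivative g z) (at 0))"
      by blast
  qed
  from choice[OF this] obtain dd where dd: "\<And>x. dd x \<in> PolyS"
    "\<And>x z. ((\<lambda>t. Az n p l (z(c := z c + t)) (fst x) (fst (snd x)) (snd (snd x))) has_real_derivative dd x z) (at 0)"
    by blast
  let ?dA = "\<lambda>z. (\<lambda>i j k. dd (i, j, k) z)"
  let ?g = "\<lambda>z. tprod n l (tprod n l (Gz n p l z) (tscale (-1) (?dA z))) (Gz n p l z) a b k"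
  have tdA: "tin (Alg n p l) ?dA" unfolding tin_def using dd(1) Alg.apoly by (auto simp: eta_contract_eq)
  have "tin (Alg n p l) (\<lambda>z. tprod n l (tprod n l (Gz n p l z) (tscale (-1) (?dA z))) (Gz n p l z))"
    using rcl_Alg by (intro tin_tprod tin_tscale tin_Gz tdA)
  hence gA: "?g \<in> Alg n p l" unfolding tin_def by blast
  have "\<forall>z\<in>DD n p l. ((\<lambda>t. Gz n p l (z(c := z c + t)) a b k) has_real_derivative ?g z) (at 0)"
  proof
    fix z assume z: "z \<in> DD n p l"
    show "((\<lambda>t. Gz n p l (z(c := z c + t)) a b k) has_real_derivative ?g z) (at 0)"
    proof (rule G_deriv[OF z c])
      fix i j k
      show "((\<lambda>t. Az n p l (z(c := z c + t)) i j k) has_real_derivative dd (i, j, k) z) (at 0)"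
        using dd(2)[where x="(i, j, k)" and z=z] by (simp only: fst_conv snd_conv)
    qed
  qed
  thus ?case using gA by (rule bexI[of _ ?g])
next
  case (aadd f g)
  then obtain f' g' where fg: "f' \<in> Alg n p l" "g' \<in> Alg n p l"
    "\<forall>z\<in>DD n p l. ((\<lambda>t. f (z(c := z c + t))) has_real_derivative f' z) (at 0)"
    "\<forall>z\<in>DD n p l. ((\<lambda>t. g (z(c := z c + t))) has_real_derivative g' z) (at 0)" by blast
  have der: "\<forall>z\<in>DD n p l. ((\<lambda>t. f (z(c := z c + t)) + g (z(c := z c + t))) has_real_derivative f' z + g' z) (at 0)"
  proof
    fix z assume "z \<in> DD n p l"
    thus "((\<lambda>t. f (z(c := z c + t)) + g (z(c := z c + t))) has_real_derivative f' z + g' z) (at 0)"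
      using DERIV_add[of "\<lambda>t. f (z(c := z c + t))" "f' z" 0 UNIV "\<lambda>t. g (z(c := z c + t))" "g' z"] fg(3,4) by blast
  qed
  have "(\<lambda>z. f' z + g' z) \<in> Alg n p l" using fg(1,2) by (rule Alg.aadd)
  with der show ?case by (rule bexI[of _ "\<lambda>z. f' z + g' z"])
next
  case (amul f g)
  then obtain f' g' where fg: "f' \<in> Alg n p l" "g' \<in> Alg n p l"
    "\<forall>z\<in>DD n p l. ((\<lambda>t. f (z(c := z c + t))) has_real_derivative f' z) (at 0)"
    "\<forall>z\<in>DD n p l. ((\<lambda>t. g (z(c := z c + t))) has_real_derivative g' z) (at 0)" by blast
  have der: "\<forall>z\<in>DD n p l. ((\<lambda>t. f (z(c := z c + t)) * g (z(c := z c + t))) has_real_derivative f' z * g z + g' z * f z) (at 0)"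
  proof
    fix z assume z: "z \<in> DD n p l"
    have "((\<lambda>t. f (z(c := z c + t)) * g (z(c := z c + t))) has_real_derivative
        f' z * g (z(c := z c + 0)) + g' z * f (z(c := z c + 0))) (at 0)"
      using DERIV_mult[of "\<lambda>t. f (z(c := z c + t))" "f' z" 0 UNIV "\<lambda>t. g (z(c := z c + t))" "g' z"] fg(3,4) z by blast
    thus "((\<lambda>t. f (z(c := z c + t)) * g (z(c := z c + t))) has_real_derivative f' z * g z + g' z * f z) (at 0)"
      by simp
  qed
  have "(\<lambda>z. f' z * g z + g' z * f z) \<in> Alg n p l" using fg(1,2) amul.hyps by (intro Alg.aadd Alg.amul)
  with der show ?case by (rule bexI[of _ "\<lambda>z. f' z * g z + g' z * f z"])
qed

lemma Alg_smooth:
  assumes "f \<in> Alg n p l"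
  shows "coord_smooth (CC n p l) (DD n p l) f"
  using assms
proof (coinduction arbitrary: f rule: coord_smooth.coinduct)
  case (coord_smooth f)
  have "coord_cont (CC n p l) (DD n p l) f"
    by (rule coord_cont_nbF) (rule Alg_tendsto[OF coord_smooth])
  moreover have "\<forall>c\<in>CC n p l. \<exists>g. (\<forall>z\<in>DD n p l. ((\<lambda>t. f (z(c := z c + t))) has_real_derivative g z) (at 0))
       \<and> (g \<in> Alg n p l \<or> coord_smooth (CC n p l) (DD n p l) g)"
    using Alg_deriv[OF coord_smooth] by blast
  ultimately show ?case by blast
qed

theorem mainTheorem14:
  fixes n p l :: nat
  assumes "p \<le> n"
  shows
    \<comment> \<open>well-definedness: I - W_U/2 is t-invertible\<close>
    "(\<forall>X\<in>tStiefel n p l. \<forall>U\<in>tTangent n p l X.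
        tinvertible n l (tsub (tid n l) (tscale (1/2) (tW n p l X U))))
   \<and> \<comment> \<open>smoothness on the Whitney sum TSt + TSt (via the ambient formula on an open set)\<close>
     (\<exists>D. coord_open (triple_coords n p l) D \<and>
        (\<forall>X\<in>tStiefel n p l. \<forall>U\<in>tTangent n p l X. \<forall>V\<in>tTangent n p l X. pack3 X U V \<in> D) \<and>
        (\<forall>i<n. \<forall>j<p. \<forall>k<l. coord_smooth (triple_coords n p l) D
            (\<lambda>z. tTransport n p l (unpack 0 z) (unpack 1 z) (unpack 2 z) i j k)))
   \<and> \<comment> \<open>tangency: T_U V lies in the tangent space at R_X(U)\<close>
     (\<forall>X\<in>tStiefel n p l. \<forall>U\<in>tTangent n p l X. \<forall>V\<in>tTangent n p l X.
        tTransport n p l X U V \<in> tTangent n p l (tCayley n p l X U))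
   \<and> \<comment> \<open>consistency: T_0 V = V\<close>
     (\<forall>X\<in>tStiefel n p l. \<forall>V\<in>tTangent n p l X.
        tTransport n p l X (\<lambda>i j k. 0) V = V)
   \<and> \<comment> \<open>linearity in V\<close>
     (\<forall>X\<in>tStiefel n p l. \<forall>U\<in>tTangent n p l X. \<forall>V1\<in>tTangent n p l X. \<forall>V2\<in>tTangent n p l X.
        \<forall>a b :: real. tTransport n p l X U (tadd (tscale a V1) (tscale b V2)) =
           tadd (tscale a (tTransport n p l X U V1)) (tscale b (tTransport n p l X U V2)))
   \<and> \<comment> \<open>isometry\<close>
     (\<forall>X\<in>tStiefel n p l. \<forall>U\<in>tTangent n p l X. \<forall>V\<in>tTangent n p l X.
        tinner n p l (tTransport n p l X U V) (tTransport n p l X U V) = tinner n p l V V)"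
proof -
  have dimsS: "tdims n p l X" if "X \<in> tStiefel n p l" for X using that unfolding tStiefel_def by simp
  have dimsT: "tdims n p l U" if "U \<in> tTangent n p l X" for U X using that unfolding tTangent_def by simp
  have P1: "\<forall>X\<in>tStiefel n p l. \<forall>U\<in>tTangent n p l X.
        tinvertible n l (tsub (tid n l) (tscale (1/2) (tW n p l X U)))"
  proof (intro ballI)
    fix X U assume X: "X \<in> tStiefel n p l" and U: "U \<in> tTangent n p l X"
    show "tinvertible n l (tsub (tid n l) (tscale (1/2) (tW n p l X U)))"
      by (rule cayley_invertible[OF tW_skew[OF dimsS[OF X] dimsT[OF U]]])
  qed
  have P2: "\<exists>D. coord_open (triple_coords n p l) D \<and>
        (\<forall>X\<in>tStiefel n p l. \<forall>U\<in>tTangent n p l X. \<forall>V\<in>tTangent n p l X. pack3 X U V \<in> D) \<and>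
        (\<forall>i<n. \<forall>j<p. \<forall>k<l. coord_smooth (triple_coords n p l) D
            (\<lambda>z. tTransport n p l (unpack 0 z) (unpack 1 z) (unpack 2 z) i j k))"
  proof (intro exI[of _ "DD n p l"] conjI ballI allI impI)
    show "coord_open (triple_coords n p l) (DD n p l)" unfolding coord_open_def by (auto intro: exI[of _ "1::real"])
  next
    fix X U V assume X: "X \<in> tStiefel n p l" and U: "U \<in> tTangent n p l X" and V: "V \<in> tTangent n p l X"
    have Xd: "tdims n p l X" and Ud: "tdims n p l U" and Vd: "tdims n p l V"
      using dimsS[OF X] dimsT[OF U] dimsT[OF V] by auto
    show "pack3 X U V \<in> DD n p l"
      unfolding coord_space_def mem_Collect_eq
    proof (intro allI impI)
      fix x :: "nat \<times> nat \<times> nat \<times> nat" assume x: "x \<notin> triple_coords n p l"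
      obtain t i j k where xe: "x = (t, i, j, k)" by (cases x) auto
      have nb: "\<not> (t < 3 \<and> i < n \<and> j < p \<and> k < l)" using x xe unfolding triple_coords_def by auto
      show "pack3 X U V x = 0"
      proof (cases "t < 3")
        case True
        hence "n \<le> i \<or> p \<le> j \<or> l \<le> k" using nb by auto
        thus ?thesis unfolding xe pack3_def using tdimsD[OF Xd] tdimsD[OF Ud] tdimsD[OF Vd] by auto
      next
        case False thus ?thesis unfolding xe pack3_def by auto
      qed
    qed
  next
    fix i j k assume "i < n" "j < p" "k < l"
    show "coord_smooth (triple_coords n p l) (DD n p l)
            (\<lambda>z. tTransport n p l (unpack 0 z) (unpack 1 z) (unpack 2 z) i j k)"
      using tin_transport[of n p l] unfolding tin_def by (intro Alg_smooth) blast
  qed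
  have P3: "\<forall>X\<in>tStiefel n p l. \<forall>U\<in>tTangent n p l X. \<forall>V\<in>tTangent n p l X.
        tTransport n p l X U V \<in> tTangent n p l (tCayley n p l X U)"
  proof (intro ballI)
    fix X U V assume X: "X \<in> tStiefel n p l" and U: "U \<in> tTangent n p l X" and V: "V \<in> tTangent n p l X"
    show "tTransport n p l X U V \<in> tTangent n p l (tCayley n p l X U)"
      unfolding tTransport_cayQ tCayley_cayQ by (rule transport_tangent[OF tW_skew[OF dimsS[OF X] dimsT[OF U]] V])
  qed
  have P4: "\<forall>X\<in>tStiefel n p l. \<forall>V\<in>tTangent n p l X. tTransport n p l X (\<lambda>i j k. 0) V = V"
  proof (intro ballI)
    fix X V assume V: "V \<in> tTangent n p l X"
    show "tTransport n p l X (\<lambda>i j k. 0) V = V" by (rule transport_zero[OF dimsT[OF V]])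
  qed
  have P5: "\<forall>X\<in>tStiefel n p l. \<forall>U\<in>tTangent n p l X. \<forall>V1\<in>tTangent n p l X. \<forall>V2\<in>tTangent n p l X.
        \<forall>a b :: real. tTransport n p l X U (tadd (tscale a V1) (tscale b V2)) =
           tadd (tscale a (tTransport n p l X U V1)) (tscale b (tTransport n p l X U V2))"
    unfolding tTransport_def by (simp add: tprod_tadd_right tprod_tscale_right)
  have P6: "\<forall>X\<in>tStiefel n p l. \<forall>U\<in>tTangent n p l X. \<forall>V\<in>tTangent n p l X.
        tinner n p l (tTransport n p l X U V) (tTransport n p l X U V) = tinner n p l V V"
  proof (intro ballI)
    fix X U V assume X: "X \<in> tStiefel n p l" and U: "U \<in> tTangent n p l X" and V: "V \<in> tTangent n p l X"
    show "tinner n p l (tTransport n p l X U V) (tTransport n p l X U V) = tinner n p l V V"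
      unfolding tTransport_cayQ by (rule transport_isometry[OF tW_skew[OF dimsS[OF X] dimsT[OF U]] dimsT[OF V]])
  qed
  show ?thesis by (intro conjI P1 P2 P3 P4 P5 P6)
qed

end
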